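(* Every equivalence corelation in $\mathbf{MetCH_{sep}}$ is effective.
   Context: A metric on a set $X$ is a map $d\colon X\times X\to[0,\infty]$ with $d(x,x)=0$ and $d(x,z)\le d(x,y)+d(y,z)$ (not necessarily symmetric, $\infty$ allowed); separated means $d(x,y)=0=d(y,x)$ implies $x=y$. A separated metric compact Hausdorff space is a compact Hausdorff space with a separated metric continuous $X\times X\to[0,\infty]$ for the upper topology on $[0,\infty]$ (open sets $]u,\infty]$); $\mathbf{MetCH_{sep}}$ is the category of these with continuous non-expansive maps. $X+X$ denotes the coproduct (disjoint union, coproduct topology, metric equal to $d$ within each copy and $\infty$ between copies). A binary corelation on $X$ is a surjective morphism $\binom{q_0}{q_1}\colon X+X\to S$ (given by $q_0,q_1\colon X\to S$), taken up to isomorphism under $X+X$. It is reflexive if there is a morphism $e\colon S\to X$ with $e\circ q_0=e\circ q_1=1_X$; symmetric if there is $s\colon S\to S$ with $s\circ q_0=q_1$ and $s\circ q_1=q_0$; transitive if, letting $\lambda_0,\lambda_1\colon S\to P$ be the pushout of $q_1$ and $q_0$ (so $\lambda_0\circ q_1=\lambda_1\circ q_0$), there is $t\colon S\to P$ with $t\circ q_0=\lambda_0\circ q_0$ and $t\circ q_1=\lambda_1\circ q_1$. An equivalence corelation is one that is reflexive, symmetric and transitive. It is effective if, with $i\colon A\to X$ the equaliser of $q_0,q_1$ in $\mathbf{MetCH_{sep}}$, the square $q_0\circ i=q_1\circ i$ is a pushout in $\mathbf{MetCH_{sep}}$ (i.e. $(q_0,q_1)$ is the cokernel pair of its equaliser).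 *)

theory Defs
  imports "HOL-Analysis.Analysis" "HOL-Library.Extended_Nonnegative_Real"
begin

type_synonym 'a metobj = "'a topology \<times> ('a \<Rightarrow> 'a \<Rightarrow> ennreal)"

definition carrier_of :: "'a metobj \<Rightarrow> 'a set" where
  "carrier_of X = topspace (fst X)"

text \<open>Continuity of d for the upper
topology on [0,\<infinity>] (open sets ]u,\<infinity>], plus the whole space) means: every
preimage of ]u,\<infinity>] is open in the product topology.\<close>

definition metch :: "'a metobj \<Rightarrow> bool" where
  "metch X \<longleftrightarrow>
     (let T = fst X; d = snd X; U = topspace T in
       compact_space T \<and> Hausdorff_space T \<and>
       (\<forall>x\<in>U. d x x = 0) \<and>
       (\<forall>x\<in>U. \<forall>y\<in>U. \<forall>z\<in>U. d x z \<le> d x y + d y z) \<and>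
       (\<forall>x\<in>U. \<forall>y\<in>U. d x y = 0 \<and> d y x = 0 \<longrightarrow> x = y) \<and>
       (\<forall>u::ennreal. openin (prod_topology T T) {p \<in> U \<times> U. u < d (fst p) (snd p)}))"

definition mor :: "'a metobj \<Rightarrow> 'b metobj \<Rightarrow> ('a \<Rightarrow> 'b) \<Rightarrow> bool" where
  "mor X Y f \<longleftrightarrow> continuous_map (fst X) (fst Y) f \<and>
     (\<forall>x\<in>carrier_of X. \<forall>y\<in>carrier_of X. snd Y (f x) (f y) \<le> snd X x y)"

text \<open>(P, l0, l1) is a pushout of f : X -> Y and g : X -> Z in MetCH_sep,
where the universal property is required against all test objects whose
carrier lives in the type 'q.\<close>

definition pushout_wrt ::
  "'q itself \<Rightarrow> 'x metobj \<Rightarrow> 'y metobj \<Rightarrow> 'z metobj \<Rightarrow> ('x \<Rightarrow> 'y) \<Rightarrow> ('x \<Rightarrow> 'z)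
     \<Rightarrow> 'p metobj \<Rightarrow> ('y \<Rightarrow> 'p) \<Rightarrow> ('z \<Rightarrow> 'p) \<Rightarrow> bool" where
  "pushout_wrt _ X Y Z f g P l0 l1 \<longleftrightarrow>
     metch X \<and> metch Y \<and> metch Z \<and> metch P \<and>
     mor X Y f \<and> mor X Z g \<and> mor Y P l0 \<and> mor Z P l1 \<and>
     (\<forall>x\<in>carrier_of X. l0 (f x) = l1 (g x)) \<and>
     (\<forall>(Q :: 'q metobj) h0 h1.
        metch Q \<and> mor Y Q h0 \<and> mor Z Q h1 \<and> (\<forall>x\<in>carrier_of X. h0 (f x) = h1 (g x))
        \<longrightarrow> (\<exists>k. mor P Q k \<and> (\<forall>y\<in>carrier_of Y. k (l0 y) = h0 y) \<and>
                 (\<forall>z\<in>carrier_of Z. k (l1 z) = h1 z) \<and>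
                 (\<forall>k'. mor P Q k' \<and> (\<forall>y\<in>carrier_of Y. k' (l0 y) = h0 y) \<and>
                       (\<forall>z\<in>carrier_of Z. k' (l1 z) = h1 z)
                       \<longrightarrow> (\<forall>p\<in>carrier_of P. k' p = k p))))"

text \<open>A binary corelation on X: a surjective morphism X+X -> S, given by the pair
of its components q0, q1 : X -> S (a morphism out of the coproduct is exactly such
a pair; surjectivity means the images of q0 and q1 cover S).\<close>

definition binary_corel :: "'x metobj \<Rightarrow> 's metobj \<Rightarrow> ('x \<Rightarrow> 's) \<Rightarrow> ('x \<Rightarrow> 's) \<Rightarrow> bool" where
  "binary_corel X S q0 q1 \<longleftrightarrow> metch X \<and> metch S \<and> mor X S q0 \<and> mor X S q1 \<and>
     carrier_of S = q0 ` carrier_of X \<union> q1 ` carrier_of X"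

definition reflexive_corel :: "'x metobj \<Rightarrow> 's metobj \<Rightarrow> ('x \<Rightarrow> 's) \<Rightarrow> ('x \<Rightarrow> 's) \<Rightarrow> bool" where
  "reflexive_corel X S q0 q1 \<longleftrightarrow>
     (\<exists>e. mor S X e \<and> (\<forall>x\<in>carrier_of X. e (q0 x) = x \<and> e (q1 x) = x))"

definition symmetric_corel :: "'x metobj \<Rightarrow> 's metobj \<Rightarrow> ('x \<Rightarrow> 's) \<Rightarrow> ('x \<Rightarrow> 's) \<Rightarrow> bool" where
  "symmetric_corel X S q0 q1 \<longleftrightarrow>
     (\<exists>s. mor S S s \<and> (\<forall>x\<in>carrier_of X. s (q0 x) = q1 x \<and> s (q1 x) = q0 x))"

text \<open>Pushouts are unique up to isomorphism and the pushout of two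
maps out of S has carrier the image of S+S, so it can be represented in the type
's + 's; an object of that type that is a pushout against all test objects of that
same type is a genuine pushout.\<close>

definition transitive_corel :: "'x metobj \<Rightarrow> 's metobj \<Rightarrow> ('x \<Rightarrow> 's) \<Rightarrow> ('x \<Rightarrow> 's) \<Rightarrow> bool" where
  "transitive_corel X S q0 q1 \<longleftrightarrow>
     (\<forall>(P :: ('s + 's) metobj) l0 l1.
        pushout_wrt TYPE('s + 's) X S S q1 q0 P l0 l1 \<longrightarrow>
        (\<exists>t. mor S P t \<and> (\<forall>x\<in>carrier_of X. t (q0 x) = l0 (q0 x) \<and> t (q1 x) = l1 (q1 x))))"

definition equivalence_corel :: "'x metobj \<Rightarrow> 's metobj \<Rightarrow> ('x \<Rightarrow> 's) \<Rightarrow> ('x \<Rightarrow> 's) \<Rightarrow> bool" where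
  "equivalence_corel X S q0 q1 \<longleftrightarrow> binary_corel X S q0 q1 \<and>
     reflexive_corel X S q0 q1 \<and> symmetric_corel X S q0 q1 \<and> transitive_corel X S q0 q1"

definition equaliser_obj :: "'x metobj \<Rightarrow> ('x \<Rightarrow> 's) \<Rightarrow> ('x \<Rightarrow> 's) \<Rightarrow> 'x metobj" where
  "equaliser_obj X q0 q1 =
     (subtopology (fst X) {x \<in> carrier_of X. q0 x = q1 x}, snd X)"

definition effective_wrt ::
  "'q itself \<Rightarrow> 'x metobj \<Rightarrow> 's metobj \<Rightarrow> ('x \<Rightarrow> 's) \<Rightarrow> ('x \<Rightarrow> 's) \<Rightarrow> bool" where
  "effective_wrt tq X S q0 q1 \<longleftrightarrow>
     pushout_wrt tq (equaliser_obj X q0 q1) X X id id S q0 q1"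

end

theory Submission
  imports Defs
begin


definition lsc :: "'a topology \<Rightarrow> ('a \<Rightarrow> ennreal) \<Rightarrow> bool" where
  "lsc T f \<longleftrightarrow> (\<forall>u. openin T {x \<in> topspace T. u < f x})"

lemma ennreal_sum_approx:
  fixes r x y :: ennreal
  assumes "r < x + y"
  shows "\<exists>a b. (a = 0 \<or> a < x) \<and> (b = 0 \<or> b < y) \<and> r < a + b"
proof (cases "r < x")
  case True
  then obtain a where "r < a" "a < x" using dense by blast
  then show ?thesis by (intro exI[of _ a] exI[of _ 0]) auto
next
  case nx: False
  show ?thesis
  proof (cases "r < y")
    case True
    then obtain b where "r < b" "b < y" using dense by blast
    then show ?thesis by (intro exI[of _ 0] exI[of _ b]) auto
  next
    case ny: False
    have rfin: "r < top" using assms top.not_eq_extremum by fastforce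
    have xfin: "x < top" using nx rfin by (meson leI le_less_trans)
    have yfin: "y < top" using ny rfin by (meson leI le_less_trans)
    obtain xr where xr: "x = ennreal xr" "xr \<ge> 0" using xfin ennreal_cases by (metis top.not_eq_extremum less_irrefl ennreal_less_top)
    obtain yr where yr: "y = ennreal yr" "yr \<ge> 0" using yfin by (metis ennreal_cases less_irrefl)
    obtain rr where rr: "r = ennreal rr" "rr \<ge> 0" using rfin by (metis ennreal_cases less_irrefl)
    have x0: "xr > 0"
    proof (rule ccontr)
      assume "\<not> xr > 0" then have "x = 0" using xr by simp
      then show False using assms ny by simp
    qed
    have y0: "yr > 0"
    proof (rule ccontr)
      assume "\<not> yr > 0" then have "y = 0" using yr by simp
      then show False using assms nx by simp
    qed
    have lt: "rr < xr + yr" using assms xr yr rr by (simp add: ennreal_plus[symmetric] ennreal_less_iff del: ennreal_plus)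
    define dl where "dl = (xr + yr - rr) / 3"
    have dl0: "dl > 0" using lt by (simp add: dl_def)
    define a where "a = max 0 (xr - dl)"
    define b where "b = max 0 (yr - dl)"
    have "a < xr" using x0 dl0 by (simp add: a_def)
    moreover have "b < yr" using y0 dl0 by (simp add: b_def)
    moreover have "rr < a + b"
    proof -
      have "a \<ge> xr - dl" "b \<ge> yr - dl" by (auto simp: a_def b_def)
      moreover have "3 * dl = xr + yr - rr" by (simp add: dl_def)
      ultimately show ?thesis using dl0 by linarith
    qed
    moreover have "a \<ge> 0" "b \<ge> 0" by (auto simp: a_def b_def)
    ultimately show ?thesis using xr yr rr
      by (intro exI[of _ "ennreal a"] exI[of _ "ennreal b"])
         (auto simp: ennreal_plus[symmetric] ennreal_less_iff simp del: ennreal_plus)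
  qed
qed

lemma lsc_comp:
  assumes "continuous_map T T' g" "lsc T' f"
  shows "lsc T (\<lambda>x. f (g x))"
  unfolding lsc_def
proof
  fix u
  have "{x \<in> topspace T. u < f (g x)} = {x \<in> topspace T. g x \<in> {y \<in> topspace T'. u < f y}}"
    using assms(1) continuous_map_image_subset_topspace by fastforce
  moreover have "openin T \<dots>"
    using assms unfolding lsc_def by (intro openin_continuous_map_preimage) auto
  ultimately show "openin T {x \<in> topspace T. u < f (g x)}" by simp
qed

lemma lsc_add:
  assumes "lsc T f" "lsc T g"
  shows "lsc T (\<lambda>x. f x + g x)"
  unfolding lsc_def
proof
  fix u
  show "openin T {x \<in> topspace T. u < f x + g x}"
  proof (subst openin_subopen, intro ballI)
    fix x0 assume x0: "x0 \<in> {x \<in> topspace T. u < f x + g x}"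
    then obtain a b where ab: "a = 0 \<or> a < f x0" "b = 0 \<or> b < g x0" "u < a + b"
      using ennreal_sum_approx by blast
    define V1 where "V1 = (if a = 0 then topspace T else {x \<in> topspace T. a < f x})"
    define V2 where "V2 = (if b = 0 then topspace T else {x \<in> topspace T. b < g x})"
    have o1: "openin T V1" using assms(1) unfolding V1_def lsc_def by auto
    have o2: "openin T V2" using assms(2) unfolding V2_def lsc_def by auto
    have "x0 \<in> V1 \<inter> V2" using x0 ab unfolding V1_def V2_def by auto
    moreover have "V1 \<inter> V2 \<subseteq> {x \<in> topspace T. u < f x + g x}"
    proof
      fix x assume x: "x \<in> V1 \<inter> V2"
      have "a \<le> f x" using x unfolding V1_def by (auto split: if_splits)
      moreover have "b \<le> g x" using x unfolding V2_def by (auto split: if_splits)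
      ultimately have "a + b \<le> f x + g x" by (rule add_mono)
      then show "x \<in> {x \<in> topspace T. u < f x + g x}" using ab(3) x unfolding V1_def by (auto split: if_splits)
    qed
    ultimately show "\<exists>T'. openin T T' \<and> x0 \<in> T' \<and> T' \<subseteq> {x \<in> topspace T. u < f x + g x}"
      using o1 o2 by blast
  qed
qed

lemma lsc_closed:
  assumes "lsc T f"
  shows "closedin T {x \<in> topspace T. f x \<le> r}"
proof -
  have "{x \<in> topspace T. f x \<le> r} = topspace T - {x \<in> topspace T. r < f x}" by auto
  then show ?thesis using assms unfolding lsc_def by auto
qed

lemma lsc_min:
  assumes "compact_space T" "lsc T f" "topspace T \<noteq> {}"
  shows "\<exists>x\<in>topspace T. \<forall>y\<in>topspace T. f x \<le> f y"
proof -
  define m where "m = (INF y\<in>topspace T. f y)"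
  define C where "C = (\<lambda>u. {x \<in> topspace T. f x \<le> u})"
  define \<U> where "\<U> = C ` {u. m < u}"
  show ?thesis
  proof (cases "m = top")
    case True
    then have "\<forall>y\<in>topspace T. f y = top" unfolding m_def by (metis INF_lower top.extremum_uniqueI)
    moreover obtain x0 where "x0 \<in> topspace T" using assms(3) by blast
    ultimately show ?thesis by auto
  next
    case mfin: False
    have "\<Inter>\<U> \<noteq> {}" using assms(1) unfolding compact_space_fip
    proof (elim allE impE)
      show "(\<forall>K\<in>\<U>. closedin T K) \<and> (\<forall>\<F>. finite \<F> \<and> \<F> \<subseteq> \<U> \<longrightarrow> \<Inter>\<F> \<noteq> {})"
      proof (intro conjI allI impI ballI)
        fix K assume "K \<in> \<U>" then show "closedin T K" unfolding \<U>_def C_def using lsc_closed[OF assms(2)] by auto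
      next
        fix \<F> assume F: "finite \<F> \<and> \<F> \<subseteq> \<U>"
        then obtain F' where F': "finite F'" "F' \<subseteq> {u. m < u}" "\<F> = C ` F'"
          unfolding \<U>_def by (meson finite_subset_image)
        show "\<Inter>\<F> \<noteq> {}"
        proof (cases "F' = {}")
          case True then show ?thesis using F' assms(3) by simp
        next
          case False
          define u0 where "u0 = Min F'"
          have "u0 \<in> F'" using F' False unfolding u0_def by simp
          then have "m < u0" using F' by auto
          then obtain x where x: "x \<in> topspace T" "f x < u0" unfolding m_def by (meson INF_less_iff)
          have "\<forall>u\<in>F'. u0 \<le> u" using F' unfolding u0_def by simp
          then have "x \<in> \<Inter>\<F>" using x F' unfolding C_def by fastforce
          then show ?thesis by blast
        qed
      qed
    qed
    then obtain x where x: "x \<in> \<Inter>\<U>" by blast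
    have ne: "{u. m < u} \<noteq> {}" using mfin top.not_eq_extremum by auto
    then have xT: "x \<in> topspace T" using x unfolding \<U>_def C_def by auto
    have "\<And>u. m < u \<Longrightarrow> f x \<le> u" using x unfolding \<U>_def C_def by auto
    then have "f x \<le> m" by (rule dense_ge)
    then have "\<forall>y\<in>topspace T. f x \<le> f y" unfolding m_def by (meson INF_lower order_trans)
    then show ?thesis using xT by blast
  qed
qed

lemma proj_closed:
  assumes "compact_space T1" "compact_space T2" "Hausdorff_space T1"
    "closedin (prod_topology T1 T2) K"
  shows "closedin T1 (fst ` K)"
proof -
  have "compact_space (prod_topology T1 T2)" using assms by (simp add: compact_space_prod_topology)
  then have "compactin (prod_topology T1 T2) K" using assms(4) by (rule closedin_compact_space)
  then have "compactin T1 (fst ` K)" by (rule image_compactin) (rule continuous_map_fst)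
  then show ?thesis using assms(3) by (simp add: compactin_imp_closedin)
qed

lemma lsc_proj_closed:
  assumes "compact_space T1" "compact_space T2" "Hausdorff_space T1"
    "lsc (prod_topology T1 T2) G"
  shows "closedin T1 {x \<in> topspace T1. \<exists>y\<in>topspace T2. G (x,y) \<le> r}"
proof -
  have "{x \<in> topspace T1. \<exists>y\<in>topspace T2. G (x,y) \<le> r} = fst ` {p \<in> topspace (prod_topology T1 T2). G p \<le> r}"
    by (auto simp: image_iff) blast
  moreover have "closedin T1 (fst ` {p \<in> topspace (prod_topology T1 T2). G p \<le> r})"
    using assms lsc_closed[OF assms(4)] by (intro proj_closed) auto
  ultimately show ?thesis by simp
qed

lemma paste2:
  assumes "continuous_map T Y F" "continuous_map T Y G" "closedin T A" "closedin T B"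
    "topspace T \<subseteq> A \<union> B" "\<And>x. x \<in> A \<Longrightarrow> x \<in> B \<Longrightarrow> x \<in> topspace T \<Longrightarrow> F x = G x"
  shows "continuous_map T Y (\<lambda>x. if x \<in> A then F x else G x)"
proof (rule continuous_map_cases)
  show "continuous_map (subtopology T (T closure_of {x. x \<in> A})) Y F"
    using assms(1) by (rule continuous_map_from_subtopology)
  show "continuous_map (subtopology T (T closure_of {x. x \<notin> A})) Y G"
    using assms(2) by (rule continuous_map_from_subtopology)
  fix x assume x: "x \<in> T frontier_of {x. x \<in> A}"
  have c1: "T closure_of {x. x \<in> A} = A" using assms(3) by (simp add: closure_of_closedin)
  have "T closure_of (topspace T - {x. x \<in> A}) \<subseteq> B"
    using assms(4,5) by (intro closure_of_minimal) auto
  then have "x \<in> A" "x \<in> B" "x \<in> topspace T" using x c1 unfolding frontier_of_closures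
    by (auto dest: closure_of_subset_topspace[THEN subsetD])
  then show "F x = G x" by (rule assms(6))
qed

lemma Hausdorff_pullback:
  assumes "Hausdorff_space H" "inj_on j A" "j ` A \<subseteq> topspace H"
  shows "Hausdorff_space (pullback_topology A j H)"
  unfolding Hausdorff_space_def
proof (intro allI impI)
  fix x y assume xy: "x \<in> topspace (pullback_topology A j H) \<and> y \<in> topspace (pullback_topology A j H) \<and> x \<noteq> y"
  then have "x \<in> A" "y \<in> A" by (auto simp: topspace_pullback_topology)
  then have "j x \<noteq> j y" "j x \<in> topspace H" "j y \<in> topspace H" using xy assms(2,3) by (auto simp: inj_on_def)
  then obtain U V where UV: "openin H U" "openin H V" "j x \<in> U" "j y \<in> V" "disjnt U V"
    using assms(1) unfolding Hausdorff_space_def by blast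
  show "\<exists>U V. openin (pullback_topology A j H) U \<and> openin (pullback_topology A j H) V \<and> x \<in> U \<and> y \<in> V \<and> disjnt U V"
    apply (rule exI[of _ "j -` U \<inter> A"], rule exI[of _ "j -` V \<inter> A"])
    using UV \<open>x \<in> A\<close> \<open>y \<in> A\<close> by (auto simp: openin_pullback_topology disjnt_def)
qed



lemma metchD:
  assumes "metch (T, d)"
  shows "compact_space T" "Hausdorff_space T" "\<And>x. x \<in> topspace T \<Longrightarrow> d x x = 0"
    "\<And>x y z. x \<in> topspace T \<Longrightarrow> y \<in> topspace T \<Longrightarrow> z \<in> topspace T \<Longrightarrow> d x z \<le> d x y + d y z"
    "\<And>x y. x \<in> topspace T \<Longrightarrow> y \<in> topspace T \<Longrightarrow> d x y = 0 \<Longrightarrow> d y x = 0 \<Longrightarrow> x = y"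
    "lsc (prod_topology T T) (\<lambda>p. d (fst p) (snd p))"
  using assms unfolding metch_def Let_def lsc_def by (auto simp: topspace_prod_topology)

lemma metchI:
  assumes "compact_space T" "Hausdorff_space T" "\<And>x. x \<in> topspace T \<Longrightarrow> d x x = 0"
    "\<And>x y z. x \<in> topspace T \<Longrightarrow> y \<in> topspace T \<Longrightarrow> z \<in> topspace T \<Longrightarrow> d x z \<le> d x y + d y z"
    "\<And>x y. x \<in> topspace T \<Longrightarrow> y \<in> topspace T \<Longrightarrow> d x y = 0 \<Longrightarrow> d y x = 0 \<Longrightarrow> x = y"
    "lsc (prod_topology T T) (\<lambda>p. d (fst p) (snd p))"
  shows "metch (T, d)"
  using assms unfolding metch_def Let_def lsc_def by (auto simp: topspace_prod_topology)

lemma morD: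
  assumes "mor (T, d) (T', d') f"
  shows "continuous_map T T' f" "\<And>x y. x \<in> topspace T \<Longrightarrow> y \<in> topspace T \<Longrightarrow> d' (f x) (f y) \<le> d x y"
    "\<And>x. x \<in> topspace T \<Longrightarrow> f x \<in> topspace T'"
  using assms unfolding mor_def carrier_of_def by (auto dest: continuous_map_image_subset_topspace)

lemma morI:
  assumes "continuous_map T T' f" "\<And>x y. x \<in> topspace T \<Longrightarrow> y \<in> topspace T \<Longrightarrow> d' (f x) (f y) \<le> d x y"
  shows "mor (T, d) (T', d') f"
  using assms unfolding mor_def carrier_of_def by auto

locale corel_setup =
  fixes T :: "'x topology" and d :: "'x \<Rightarrow> 'x \<Rightarrow> ennreal"
    and TS :: "'s topology" and dS :: "'s \<Rightarrow> 's \<Rightarrow> ennreal"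
    and q0 q1 :: "'x \<Rightarrow> 's" and e :: "'s \<Rightarrow> 'x" and sm :: "'s \<Rightarrow> 's"
  assumes metX: "metch (T, d)" and metS: "metch (TS, dS)"
    and q0m: "mor (T, d) (TS, dS) q0" and q1m: "mor (T, d) (TS, dS) q1"
    and cover: "topspace TS = q0 ` topspace T \<union> q1 ` topspace T"
    and em: "mor (TS, dS) (T, d) e" and eq: "\<And>x. x \<in> topspace T \<Longrightarrow> e (q0 x) = x \<and> e (q1 x) = x"
    and smm: "mor (TS, dS) (TS, dS) sm" and smq: "\<And>x. x \<in> topspace T \<Longrightarrow> sm (q0 x) = q1 x \<and> sm (q1 x) = q0 x"
begin

abbreviation "U \<equiv> topspace T"
abbreviation "V \<equiv> topspace TS"

lemmas X = metchD[OF metX]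
lemmas S = metchD[OF metS]
lemmas Q0 = morD[OF q0m]
lemmas Q1 = morD[OF q1m]
lemmas E = morD[OF em]
lemmas SM = morD[OF smm]

lemma e0[simp]: "x \<in> U \<Longrightarrow> e (q0 x) = x" and e1[simp]: "x \<in> U \<Longrightarrow> e (q1 x) = x"
  using eq by auto

lemma dq0: "x \<in> U \<Longrightarrow> y \<in> U \<Longrightarrow> dS (q0 x) (q0 y) = d x y"
  using Q0(2)[of x y] E(2)[of "q0 x" "q0 y"] Q0(3) by (auto intro: antisym)

lemma dq1: "x \<in> U \<Longrightarrow> y \<in> U \<Longrightarrow> dS (q1 x) (q1 y) = d x y"
  using Q1(2)[of x y] E(2)[of "q1 x" "q1 y"] Q1(3) by (auto intro: antisym)

lemma c_ge: "x \<in> U \<Longrightarrow> y \<in> U \<Longrightarrow> d x y \<le> dS (q0 x) (q1 y)"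
  using E(2)[of "q0 x" "q1 y"] Q0(3) Q1(3) by auto

lemma c_sym: "x \<in> U \<Longrightarrow> y \<in> U \<Longrightarrow> dS (q1 x) (q0 y) = dS (q0 x) (q1 y)"
  using SM(2)[of "q0 x" "q1 y"] SM(2)[of "q1 x" "q0 y"] Q0(3) Q1(3) smq by (auto intro: antisym)

lemma q0q1: "x \<in> U \<Longrightarrow> y \<in> U \<Longrightarrow> q0 x = q1 y \<Longrightarrow> x = y"
  by (metis e0 e1)

lemma q0inj: "x \<in> U \<Longrightarrow> y \<in> U \<Longrightarrow> q0 x = q0 y \<Longrightarrow> x = y"
  by (metis e0)

lemma q1inj: "x \<in> U \<Longrightarrow> y \<in> U \<Longrightarrow> q1 x = q1 y \<Longrightarrow> x = y"
  by (metis e1)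

lemma Vcases: "s \<in> V \<Longrightarrow> (\<And>x. x \<in> U \<Longrightarrow> s = q0 x \<Longrightarrow> P) \<Longrightarrow> (\<And>x. x \<in> U \<Longrightarrow> s = q1 x \<Longrightarrow> P) \<Longrightarrow> P"
  using cover by auto

lemma c_lsc: "lsc (prod_topology T T) (\<lambda>p. dS (q0 (fst p)) (q1 (snd p)))"
proof -
  have "continuous_map (prod_topology T T) (prod_topology TS TS) (\<lambda>p. (q0 (fst p), q1 (snd p)))"
    using continuous_map_pairedI[OF continuous_map_compose[OF continuous_map_fst Q0(1)]
         continuous_map_compose[OF continuous_map_snd Q1(1)]] by (simp add: o_def)
  from lsc_comp[OF this S(6)] show ?thesis by simp
qed

end



context corel_setup begin

abbreviation "cc x y \<equiv> dS (q0 x) (q1 y)"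

definition FF :: "'x \<times> 'x \<Rightarrow> 'x \<times> 'x \<Rightarrow> ennreal" where
  "FF a b = d (fst a) (fst b) + cc (fst b) (snd b) + d (snd b) (snd a)"

lemma FF_lsc:
  assumes "a \<in> U \<times> U"
  shows "lsc (prod_topology T T) (FF a)"
proof -
  have c1: "continuous_map (prod_topology T T) (prod_topology T T) (\<lambda>b. (fst a, fst b))"
    using assms by (intro continuous_map_pairedI continuous_map_fst) auto
  have c2: "continuous_map (prod_topology T T) (prod_topology T T) (\<lambda>b. (snd b, snd a))"
    using assms by (intro continuous_map_pairedI continuous_map_snd) auto
  have l1: "lsc (prod_topology T T) (\<lambda>b. d (fst a) (fst b))" using lsc_comp[OF c1 X(6)] by simp
  have l2: "lsc (prod_topology T T) (\<lambda>b. d (snd b) (snd a))" using lsc_comp[OF c2 X(6)] by simp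
  have "lsc (prod_topology T T) (\<lambda>b. d (fst a) (fst b) + cc (fst b) (snd b) + d (snd b) (snd a))"
    by (intro lsc_add l1 l2 c_lsc)
  then show ?thesis unfolding FF_def[abs_def] .
qed

lemma FF_refl: "a \<in> U \<times> U \<Longrightarrow> FF a a = cc (fst a) (snd a)"
  unfolding FF_def using X(3) by auto

lemma FF_trans:
  assumes "a \<in> U \<times> U" "b \<in> U \<times> U" "c \<in> U \<times> U"
    "FF a b \<le> cc (fst a) (snd a)" "FF b c \<le> cc (fst b) (snd b)"
  shows "FF a c \<le> cc (fst a) (snd a)"
proof -
  have "FF a c \<le> d (fst a) (fst b) + d (fst b) (fst c) + cc (fst c) (snd c) + d (snd c) (snd b) + d (snd b) (snd a)"
  proof -
    have "d (fst a) (fst c) \<le> d (fst a) (fst b) + d (fst b) (fst c)" using X(4) assms by auto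
    moreover have "d (snd c) (snd a) \<le> d (snd c) (snd b) + d (snd b) (snd a)" using X(4) assms by auto
    ultimately show ?thesis unfolding FF_def
      by (metis (no_types, lifting) add.assoc add_mono order_refl)
  qed
  also have "\<dots> = d (fst a) (fst b) + FF b c + d (snd b) (snd a)" unfolding FF_def by (simp add: add.assoc)
  also have "\<dots> \<le> d (fst a) (fst b) + cc (fst b) (snd b) + d (snd b) (snd a)"
    using assms(5) by (intro add_mono) auto
  also have "\<dots> = FF a b" unfolding FF_def ..
  finally show ?thesis using assms(4) by simp
qed

lemma FF_antisym:
  assumes "a \<in> U \<times> U" "b \<in> U \<times> U" "cc (fst a) (snd a) < \<infinity>"
    "FF a b \<le> cc (fst a) (snd a)" "FF b a \<le> cc (fst b) (snd b)"
  shows "a = b"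
proof -
  let ?ca = "cc (fst a) (snd a)" and ?cb = "cc (fst b) (snd b)"
  let ?P = "d (fst a) (fst b) + d (snd b) (snd a)" and ?Q = "d (fst b) (fst a) + d (snd a) (snd b)"
  have 1: "?P + ?cb \<le> ?ca" using assms(4) unfolding FF_def by (simp add: ac_simps)
  have 2: "?Q + ?ca \<le> ?cb" using assms(5) unfolding FF_def by (simp add: ac_simps)
  have "?ca + (?P + ?Q) \<le> ?ca + 0"
  proof -
    have "?ca + (?P + ?Q) = ?P + (?Q + ?ca)" by (simp add: ac_simps)
    also have "\<dots> \<le> ?P + ?cb" using 2 by (intro add_mono) auto
    also have "\<dots> \<le> ?ca" using 1 .
    finally show ?thesis by simp
  qed
  then have "?P + ?Q \<le> 0" using assms(3) by (auto simp: ennreal_add_left_cancel_le)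
  then have "d (fst a) (fst b) = 0" "d (snd b) (snd a) = 0" "d (fst b) (fst a) = 0" "d (snd a) (snd b) = 0"
    by auto
  then have "fst a = fst b" "snd a = snd b" using X(5) assms(1,2) by auto
  then show ?thesis by (simp add: prod_eq_iff)
qed

lemma chain_min:
  assumes "finite F" "F \<noteq> {}" "F \<subseteq> C" "C \<in> Chains r" "trans r" "\<And>a. a \<in> C \<Longrightarrow> (a,a) \<in> r"
  shows "\<exists>m\<in>F. \<forall>a\<in>F. (a,m) \<in> r"
  using assms(1,2,3)
proof (induction F rule: finite_ne_induct)
  case (singleton x)
  then show ?case using assms(6) by auto
next
  case (insert b F)
  then obtain m where m: "m \<in> F" "\<forall>a\<in>F. (a,m) \<in> r" by auto
  have "b \<in> C" "m \<in> C" using insert m by auto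
  then have "(b,m) \<in> r \<or> (m,b) \<in> r" using assms(4) unfolding Chains_def by auto
  then show ?case
  proof
    assume "(b,m) \<in> r" then show ?thesis using m by auto
  next
    assume mb: "(m,b) \<in> r"
    have "\<forall>a\<in>insert b F. (a,b) \<in> r"
      using m mb assms(5,6) \<open>b \<in> C\<close> unfolding trans_def by blast
    then show ?thesis by blast
  qed
qed

lemma key:
  assumes tr: "\<And>p q. p \<in> U \<Longrightarrow> q \<in> U \<Longrightarrow> \<exists>z\<in>U. cc p z + cc z q \<le> cc p q"
    and x: "x \<in> U" and y: "y \<in> U" and fin: "cc x y < \<infinity>"
  shows "\<exists>a\<in>U. q0 a = q1 a \<and> d x a + d a y \<le> cc x y"
proof -
  define W where "W = {b \<in> U \<times> U. FF (x,y) b \<le> cc x y}"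
  define r where "r = {(a,b). a \<in> W \<and> b \<in> W \<and> FF a b \<le> cc (fst a) (snd a)}"
  have xyW: "(x,y) \<in> W" unfolding W_def using x y FF_refl[of "(x,y)"] by auto
  have WU: "W \<subseteq> U \<times> U" unfolding W_def by auto
  have Wfin: "cc (fst b) (snd b) < \<infinity>" if "b \<in> W" for b
  proof -
    have "cc (fst b) (snd b) \<le> FF (x,y) b" unfolding FF_def
      by (intro add_increasing2[OF zero_le] add_increasing[OF zero_le] order_refl)
    then show ?thesis using that fin unfolding W_def by auto
  qed
  have refl: "(a,a) \<in> r" if "a \<in> W" for a using that WU FF_refl unfolding r_def by auto
  have Field: "Field r = W" using refl unfolding r_def Field_def by auto
  have transr: "trans r"
    unfolding trans_def
  proof (intro allI impI)
    fix a b c assume "(a,b) \<in> r" "(b,c) \<in> r"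
    then have "a \<in> W" "b \<in> W" "c \<in> W" "FF a b \<le> cc (fst a) (snd a)" "FF b c \<le> cc (fst b) (snd b)"
      unfolding r_def by auto
    then have "FF a c \<le> cc (fst a) (snd a)" using WU FF_trans[of a b c] by blast
    then show "(a,c) \<in> r" using \<open>a \<in> W\<close> \<open>c \<in> W\<close> unfolding r_def by auto
  qed
  have po: "Partial_order r"
    unfolding partial_order_on_def preorder_on_def Field
  proof (intro conjI)
    show "refl_on W r" unfolding refl_on_def r_def using refl by (auto simp: r_def)
    show "trans r" by (rule transr)
    show "r \<subseteq> W \<times> W" unfolding r_def by auto
    show "antisym r" unfolding antisym_def
    proof (intro allI impI)
      fix a b assume "(a,b) \<in> r" "(b,a) \<in> r"
      then have "a \<in> W" "b \<in> W" "FF a b \<le> cc (fst a) (snd a)" "FF b a \<le> cc (fst b) (snd b)"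
        unfolding r_def by auto
      then show "a = b" using WU Wfin[of a] FF_antisym[of a b] by blast
    qed
  qed
  have ub: "\<exists>u\<in>Field r. \<forall>a\<in>C. (a, u) \<in> r" if C: "C \<in> Chains r" for C
  proof (cases "C = {}")
    case True then show ?thesis using xyW Field by auto
  next
    case False
    have CW: "C \<subseteq> W" using C Field unfolding Chains_def by (auto simp: r_def)
    define L where "L a = {b \<in> topspace (prod_topology T T). FF a b \<le> cc (fst a) (snd a)}" for a
    have cpt: "compact_space (prod_topology T T)" using X(1) by (simp add: compact_space_prod_topology)
    have "\<Inter>(L ` C) \<noteq> {}" using cpt unfolding compact_space_fip
    proof (elim allE impE)
      show "(\<forall>K\<in>L ` C. closedin (prod_topology T T) K) \<and> (\<forall>\<F>. finite \<F> \<and> \<F> \<subseteq> L ` C \<longrightarrow> \<Inter>\<F> \<noteq> {})"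
      proof (intro conjI allI impI ballI)
        fix K assume "K \<in> L ` C"
        then obtain a where a: "a \<in> C" "K = L a" by auto
        then have "a \<in> U \<times> U" using CW WU by auto
        then show "closedin (prod_topology T T) K" unfolding a L_def by (intro lsc_closed FF_lsc)
      next
        fix \<F> assume F: "finite \<F> \<and> \<F> \<subseteq> L ` C"
        then obtain F' where F': "finite F'" "F' \<subseteq> C" "\<F> = L ` F'"
          by (meson finite_subset_image)
        show "\<Inter>\<F> \<noteq> {}"
        proof (cases "F' = {}")
          case True then show ?thesis using F' by simp
        next
          case False
          obtain m where m: "m \<in> F'" "\<forall>a\<in>F'. (a,m) \<in> r"
            using chain_min[OF F'(1) False F'(2) C transr] refl CW by blast
          have mU: "m \<in> topspace (prod_topology T T)" using m F'(2) CW WU by (auto simp: topspace_prod_topology)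
          have "m \<in> L a" if "a \<in> F'" for a
            using m(2) that mU unfolding L_def r_def by auto
          then have "m \<in> \<Inter>\<F>" using F'(3) by blast
          then show ?thesis by blast
        qed
      qed
    qed
    then obtain u where u: "u \<in> \<Inter>(L ` C)" by blast
    obtain a0 where a0: "a0 \<in> C" using False by blast
    have uU: "u \<in> U \<times> U" using u a0 unfolding L_def by (auto simp: topspace_prod_topology)
    have "u \<in> W"
    proof -
      have "FF (x,y) a0 \<le> cc x y" using a0 CW unfolding W_def by auto
      moreover have "FF a0 u \<le> cc (fst a0) (snd a0)" using u a0 unfolding L_def by auto
      moreover have "(x,y) \<in> U \<times> U" "a0 \<in> U \<times> U" using x y a0 CW WU by auto
      ultimately have "FF (x,y) u \<le> cc (fst (x,y)) (snd (x,y))"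
        using FF_trans[of "(x,y)" a0 u] uU by simp
      then show ?thesis using uU unfolding W_def by auto
    qed
    moreover have "\<forall>a\<in>C. (a, u) \<in> r" using u \<open>u \<in> W\<close> CW unfolding L_def r_def by auto
    ultimately show ?thesis using Field by auto
  qed
  obtain m where m: "m \<in> Field r" "\<forall>a\<in>Field r. (m, a) \<in> r \<longrightarrow> a = m"
    using Zorns_po_lemma[OF po ub] by blast
  obtain p q where pq: "m = (p,q)" by fastforce
  have mW: "(p,q) \<in> W" using m pq Field by auto
  then have p: "p \<in> U" and q: "q \<in> U" using WU by auto
  obtain z where z: "z \<in> U" "cc p z + cc z q \<le> cc p q" using tr[OF p q] by blast
  have "FF (p,q) (p,z) \<le> cc p q"
  proof -
    have "FF (p,q) (p,z) = cc p z + d z q" unfolding FF_def using X(3) p by simp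
    also have "\<dots> \<le> cc p z + cc z q" using c_ge[OF z(1) q] by (intro add_mono) auto
    finally show ?thesis using z(2) by simp
  qed
  moreover have "FF (x,y) (p,q) \<le> cc x y" using mW unfolding W_def by simp
  ultimately have "FF (x,y) (p,z) \<le> cc (fst (x,y)) (snd (x,y))"
    using FF_trans[of "(x,y)" "(p,q)" "(p,z)"] p q z x y by simp
  then have pzW: "(p,z) \<in> W" using p z unfolding W_def by auto
  have "FF (p,q) (p,z) \<le> cc p q" by fact
  then have "((p,q),(p,z)) \<in> r" using mW pzW unfolding r_def by auto
  then have zq: "z = q" using m pq Field pzW by auto
  have zq1: "FF (p,q) (z,q) \<le> cc p q"
  proof -
    have "FF (p,q) (z,q) = d p z + cc z q" unfolding FF_def using X(3) q by simp
    also have "\<dots> \<le> cc p z + cc z q" using c_ge[OF p z(1)] by (intro add_mono) auto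
    finally show ?thesis using z(2) by simp
  qed
  have "FF (x,y) (p,q) \<le> cc x y" using mW unfolding W_def by simp
  then have "FF (x,y) (z,q) \<le> cc (fst (x,y)) (snd (x,y))"
    using FF_trans[of "(x,y)" "(p,q)" "(z,q)"] zq1 p q z x y by simp
  then have zqW: "(z,q) \<in> W" using q z unfolding W_def by auto
  have "((p,q),(z,q)) \<in> r" using mW zqW zq1 unfolding r_def by auto
  then have zp: "z = p" using m pq Field zqW by auto
  have pp: "q = p" using zq zp by simp
  have "cc p p < \<infinity>" using Wfin[OF mW] pp by simp
  moreover have "cc p p + cc p p \<le> cc p p + 0" using z(2) zp pp by simp
  ultimately have c0: "cc p p = 0" by (auto simp: ennreal_add_left_cancel_le)
  then have "dS (q1 p) (q0 p) = 0" using c_sym[OF p p] by simp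
  then have "q0 p = q1 p" using S(5)[of "q0 p" "q1 p"] c0 Q0(3) Q1(3) p by auto
  moreover have "d x p + d p y \<le> cc x y"
    using mW pp c0 unfolding W_def FF_def by simp
  ultimately show ?thesis using p by blast
qed

end


lemma lsc_of_closed:
  assumes "\<And>u. closedin T {x \<in> topspace T. f x \<le> u}"
  shows "lsc T f"
  unfolding lsc_def
proof
  fix u
  have "{x \<in> topspace T. u < f x} = topspace T - {x \<in> topspace T. f x \<le> u}" by auto
  then show "openin T {x \<in> topspace T. u < f x}" using assms[of u] by auto
qed

context corel_setup begin

definition DLR :: "'s \<Rightarrow> 's \<Rightarrow> ennreal" where
  "DLR s s' = (INF z\<in>U. dS s (q1 z) + dS (q0 z) s')"
definition DRL :: "'s \<Rightarrow> 's \<Rightarrow> ennreal" where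
  "DRL s s' = (INF z\<in>U. dS s (q0 z) + dS (q1 z) s')"

lemma DLR_le: "z \<in> U \<Longrightarrow> DLR s s' \<le> dS s (q1 z) + dS (q0 z) s'"
  unfolding DLR_def by (rule INF_lower)
lemma DRL_le: "z \<in> U \<Longrightarrow> DRL s s' \<le> dS s (q0 z) + dS (q1 z) s'"
  unfolding DRL_def by (rule INF_lower)

lemma cont_pair_const1: "s \<in> V \<Longrightarrow> continuous_map T (prod_topology TS TS) (\<lambda>z. (s, q1 z))"
  using Q1(1) by (intro continuous_map_pairedI) auto
lemma cont_pair_const2: "s \<in> V \<Longrightarrow> continuous_map T (prod_topology TS TS) (\<lambda>z. (q0 z, s))"
  using Q0(1) by (intro continuous_map_pairedI) auto
lemma cont_pair_const3: "s \<in> V \<Longrightarrow> continuous_map T (prod_topology TS TS) (\<lambda>z. (s, q0 z))"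
  using Q0(1) by (intro continuous_map_pairedI) auto
lemma cont_pair_const4: "s \<in> V \<Longrightarrow> continuous_map T (prod_topology TS TS) (\<lambda>z. (q1 z, s))"
  using Q1(1) by (intro continuous_map_pairedI) auto

lemma U_ne: "s \<in> V \<Longrightarrow> U \<noteq> {}"
  using cover by auto

lemma DLR_attain:
  assumes "s \<in> V" "s' \<in> V"
  shows "\<exists>z\<in>U. DLR s s' = dS s (q1 z) + dS (q0 z) s'"
proof -
  have "lsc T (\<lambda>z. dS s (q1 z) + dS (q0 z) s')"
    using lsc_comp[OF cont_pair_const1[OF assms(1)] S(6)] lsc_comp[OF cont_pair_const2[OF assms(2)] S(6)]
    by (intro lsc_add) auto
  then obtain z where z: "z \<in> U" "\<forall>y\<in>U. dS s (q1 z) + dS (q0 z) s' \<le> dS s (q1 y) + dS (q0 y) s'"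
    using lsc_min[OF X(1)] U_ne[OF assms(1)] by blast
  then have "DLR s s' = dS s (q1 z) + dS (q0 z) s'"
    unfolding DLR_def by (intro antisym INF_lower le_INF_iff[THEN iffD2]) auto
  then show ?thesis using z by blast
qed

lemma DRL_attain:
  assumes "s \<in> V" "s' \<in> V"
  shows "\<exists>z\<in>U. DRL s s' = dS s (q0 z) + dS (q1 z) s'"
proof -
  have "lsc T (\<lambda>z. dS s (q0 z) + dS (q1 z) s')"
    using lsc_comp[OF cont_pair_const3[OF assms(1)] S(6)] lsc_comp[OF cont_pair_const4[OF assms(2)] S(6)]
    by (intro lsc_add) auto
  then obtain z where z: "z \<in> U" "\<forall>y\<in>U. dS s (q0 z) + dS (q1 z) s' \<le> dS s (q0 y) + dS (q1 y) s'"
    using lsc_min[OF X(1)] U_ne[OF assms(1)] by blast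
  then have "DRL s s' = dS s (q0 z) + dS (q1 z) s'"
    unfolding DRL_def by (intro antisym INF_lower le_INF_iff[THEN iffD2]) auto
  then show ?thesis using z by blast
qed

lemma DLR_lsc: "lsc (prod_topology TS TS) (\<lambda>p. DLR (fst p) (snd p))"
proof (rule lsc_of_closed)
  fix u
  let ?G = "\<lambda>w. dS (fst (fst w)) (q1 (snd w)) + dS (q0 (snd w)) (snd (fst w))"
  have c1: "continuous_map (prod_topology (prod_topology TS TS) T) (prod_topology TS TS) (\<lambda>w. (fst (fst w), q1 (snd w)))"
    using continuous_map_pairedI[OF continuous_map_compose[OF continuous_map_fst continuous_map_fst]
        continuous_map_compose[OF continuous_map_snd Q1(1)]] by (simp add: o_def)
  have c2: "continuous_map (prod_topology (prod_topology TS TS) T) (prod_topology TS TS) (\<lambda>w. (q0 (snd w), snd (fst w)))"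
    using continuous_map_pairedI[OF continuous_map_compose[OF continuous_map_snd Q0(1)]
        continuous_map_compose[OF continuous_map_fst continuous_map_snd]] by (simp add: o_def)
  have "lsc (prod_topology (prod_topology TS TS) T) ?G"
    using lsc_comp[OF c1 S(6)] lsc_comp[OF c2 S(6)] by (intro lsc_add) auto
  then have cl: "closedin (prod_topology TS TS) {p \<in> topspace (prod_topology TS TS). \<exists>z\<in>U. ?G (p,z) \<le> u}"
    using S(1,2) X(1) by (intro lsc_proj_closed) (simp_all add: compact_space_prod_topology Hausdorff_space_prod_topology)
  have "{p \<in> topspace (prod_topology TS TS). DLR (fst p) (snd p) \<le> u} = {p \<in> topspace (prod_topology TS TS). \<exists>z\<in>U. ?G (p,z) \<le> u}"
  proof (intro Collect_cong conj_cong refl iffI)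
    fix p assume p: "p \<in> topspace (prod_topology TS TS)" and "DLR (fst p) (snd p) \<le> u"
    then obtain z where "z \<in> U" "DLR (fst p) (snd p) = ?G (p,z)" using DLR_attain[of "fst p" "snd p"] by (auto simp: topspace_prod_topology)
    then show "\<exists>z\<in>U. ?G (p,z) \<le> u" using \<open>DLR (fst p) (snd p) \<le> u\<close> by auto
  next
    fix p assume "\<exists>z\<in>U. ?G (p,z) \<le> u"
    then obtain z where "z \<in> U" "?G (p,z) \<le> u" by blast
    then show "DLR (fst p) (snd p) \<le> u" using DLR_le[of z "fst p" "snd p"] by simp
  qed
  then show "closedin (prod_topology TS TS) {p \<in> topspace (prod_topology TS TS). DLR (fst p) (snd p) \<le> u}"
    using cl by simp
qed

lemma DRL_lsc: "lsc (prod_topology TS TS) (\<lambda>p. DRL (fst p) (snd p))"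
proof (rule lsc_of_closed)
  fix u
  let ?G = "\<lambda>w. dS (fst (fst w)) (q0 (snd w)) + dS (q1 (snd w)) (snd (fst w))"
  have c1: "continuous_map (prod_topology (prod_topology TS TS) T) (prod_topology TS TS) (\<lambda>w. (fst (fst w), q0 (snd w)))"
    using continuous_map_pairedI[OF continuous_map_compose[OF continuous_map_fst continuous_map_fst]
        continuous_map_compose[OF continuous_map_snd Q0(1)]] by (simp add: o_def)
  have c2: "continuous_map (prod_topology (prod_topology TS TS) T) (prod_topology TS TS) (\<lambda>w. (q1 (snd w), snd (fst w)))"
    using continuous_map_pairedI[OF continuous_map_compose[OF continuous_map_snd Q1(1)]
        continuous_map_compose[OF continuous_map_fst continuous_map_snd]] by (simp add: o_def)
  have "lsc (prod_topology (prod_topology TS TS) T) ?G"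
    using lsc_comp[OF c1 S(6)] lsc_comp[OF c2 S(6)] by (intro lsc_add) auto
  then have cl: "closedin (prod_topology TS TS) {p \<in> topspace (prod_topology TS TS). \<exists>z\<in>U. ?G (p,z) \<le> u}"
    using S(1,2) X(1) by (intro lsc_proj_closed) (simp_all add: compact_space_prod_topology Hausdorff_space_prod_topology)
  have "{p \<in> topspace (prod_topology TS TS). DRL (fst p) (snd p) \<le> u} = {p \<in> topspace (prod_topology TS TS). \<exists>z\<in>U. ?G (p,z) \<le> u}"
  proof (intro Collect_cong conj_cong refl iffI)
    fix p assume p: "p \<in> topspace (prod_topology TS TS)" and "DRL (fst p) (snd p) \<le> u"
    then obtain z where "z \<in> U" "DRL (fst p) (snd p) = ?G (p,z)" using DRL_attain[of "fst p" "snd p"] by (auto simp: topspace_prod_topology)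
    then show "\<exists>z\<in>U. ?G (p,z) \<le> u" using \<open>DRL (fst p) (snd p) \<le> u\<close> by auto
  next
    fix p assume "\<exists>z\<in>U. ?G (p,z) \<le> u"
    then obtain z where "z \<in> U" "?G (p,z) \<le> u" by blast
    then show "DRL (fst p) (snd p) \<le> u" using DRL_le[of z "fst p" "snd p"] by simp
  qed
  then show "closedin (prod_topology TS TS) {p \<in> topspace (prod_topology TS TS). DRL (fst p) (snd p) \<le> u}"
    using cl by simp
qed

end


context corel_setup begin

definition CP :: "('s + 's) set" where "CP = Inl ` V \<union> Inr ` (V - q0 ` U)"
definition l1 :: "'s \<Rightarrow> 's + 's" where "l1 s = (if s \<in> q0 ` U then Inl (q1 (e s)) else Inr s)"
definition ff :: "'s + 's \<Rightarrow> 's" where "ff w = (case w of Inl s \<Rightarrow> s | Inr s \<Rightarrow> q1 (e s))"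
definition ff' :: "'s + 's \<Rightarrow> 's" where "ff' w = (case w of Inl s \<Rightarrow> q0 (e s) | Inr s \<Rightarrow> s)"
definition TP :: "('s + 's) topology" where
  "TP = pullback_topology CP (\<lambda>w. (ff w, ff' w)) (prod_topology TS TS)"
definition dP :: "'s + 's \<Rightarrow> 's + 's \<Rightarrow> ennreal" where
  "dP w w' = (case w of Inl s \<Rightarrow> (case w' of Inl s' \<Rightarrow> dS s s' | Inr s' \<Rightarrow> DLR s s')
                      | Inr s \<Rightarrow> (case w' of Inl s' \<Rightarrow> DRL s s' | Inr s' \<Rightarrow> dS s s'))"

lemma eV: "s \<in> V \<Longrightarrow> e s \<in> U" using E(3) by simp
lemma q0V: "x \<in> U \<Longrightarrow> q0 x \<in> V" using Q0(3) by simp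
lemma q1V: "x \<in> U \<Longrightarrow> q1 x \<in> V" using Q1(3) by simp

lemma ff_Inl[simp]: "ff (Inl s) = s" and ff'_Inl[simp]: "ff' (Inl s) = q0 (e s)"
  and ff_Inr[simp]: "ff (Inr s) = q1 (e s)" and ff'_Inr[simp]: "ff' (Inr s) = s"
  by (simp_all add: ff_def ff'_def)

lemma ff_l1: "s \<in> V \<Longrightarrow> ff (l1 s) = q1 (e s)"
  unfolding l1_def by (auto simp: eV)
lemma ff'_l1: "s \<in> V \<Longrightarrow> ff' (l1 s) = s"
  unfolding l1_def by (auto simp: eV)

lemma l1_q0: "x \<in> U \<Longrightarrow> l1 (q0 x) = Inl (q1 x)"
  unfolding l1_def by auto

lemma Inl_CP: "s \<in> V \<Longrightarrow> Inl s \<in> CP" unfolding CP_def by auto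
lemma l1_CP: "s \<in> V \<Longrightarrow> l1 s \<in> CP" unfolding CP_def l1_def using q1V eV by auto

lemma CP_eq: "CP = Inl ` V \<union> l1 ` V"
proof
  show "CP \<subseteq> Inl ` V \<union> l1 ` V"
  proof
    fix w assume "w \<in> CP"
    then consider s where "s \<in> V" "w = Inl s" | s where "s \<in> V" "s \<notin> q0 ` U" "w = Inr s"
      unfolding CP_def by auto
    then show "w \<in> Inl ` V \<union> l1 ` V"
    proof cases
      case 1 then show ?thesis by auto
    next
      case 2 then have "w = l1 s" unfolding l1_def by auto
      then show ?thesis using 2 by auto
    qed
  qed
  show "Inl ` V \<union> l1 ` V \<subseteq> CP" using Inl_CP l1_CP by auto
qed

lemma CP_cases:
  assumes "w \<in> CP"
  obtains s where "s \<in> V" "w = Inl s" | s where "s \<in> V" "w = l1 s"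
  using assms CP_eq by auto

lemma jj_CP: "w \<in> CP \<Longrightarrow> (ff w, ff' w) \<in> V \<times> V"
  by (erule CP_cases) (auto simp: ff_l1 ff'_l1 eV q0V q1V)

lemma topspace_TP: "topspace TP = CP"
  unfolding TP_def topspace_pullback_topology using jj_CP by (auto simp: topspace_prod_topology)

lemma cont_ff: "continuous_map TP TS ff"
proof -
  have "continuous_map TP TS (fst \<circ> (\<lambda>w. (ff w, ff' w)))"
    unfolding TP_def by (rule continuous_map_pullback) (rule continuous_map_fst)
  then show ?thesis by (simp add: o_def)
qed

lemma cont_ff': "continuous_map TP TS ff'"
proof -
  have "continuous_map TP TS (snd \<circ> (\<lambda>w. (ff w, ff' w)))"
    unfolding TP_def by (rule continuous_map_pullback) (rule continuous_map_snd)
  then show ?thesis by (simp add: o_def)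
qed

lemma cont_qe0: "continuous_map TS TS (\<lambda>s. q0 (e s))"
  using continuous_map_compose[OF E(1) Q0(1)] by (simp add: o_def)
lemma cont_qe1: "continuous_map TS TS (\<lambda>s. q1 (e s))"
  using continuous_map_compose[OF E(1) Q1(1)] by (simp add: o_def)

lemma cont_Inl: "continuous_map TS TP Inl"
  unfolding TP_def
proof (rule continuous_map_pullback')
  show "continuous_map TS (prod_topology TS TS) ((\<lambda>w. (ff w, ff' w)) \<circ> Inl)"
    using continuous_map_pairedI[OF continuous_map_id cont_qe0] by (simp add: o_def id_def)
  show "V \<subseteq> Inl -` CP" using Inl_CP by auto
qed

lemma cont_l1: "continuous_map TS TP l1"
  unfolding TP_def
proof (rule continuous_map_pullback')
  have "continuous_map TS (prod_topology TS TS) (\<lambda>s. (q1 (e s), s))"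
    using continuous_map_pairedI[OF cont_qe1 continuous_map_id] by (simp add: id_def)
  then show "continuous_map TS (prod_topology TS TS) ((\<lambda>w. (ff w, ff' w)) \<circ> l1)"
    by (rule continuous_map_eq) (simp add: ff_l1 ff'_l1)
  show "V \<subseteq> l1 -` CP" using l1_CP by auto
qed

lemma compact_TP: "compact_space TP"
proof -
  have "compactin TP (Inl ` V)" by (rule image_compactin[OF _ cont_Inl]) (use S(1) compact_space_def in auto)
  moreover have "compactin TP (l1 ` V)" by (rule image_compactin[OF _ cont_l1]) (use S(1) compact_space_def in auto)
  ultimately have "compactin TP (Inl ` V \<union> l1 ` V)" by (rule compactin_Un)
  then show ?thesis unfolding compact_space_def topspace_TP CP_eq .
qed

lemma inj_jj: "inj_on (\<lambda>w. (ff w, ff' w)) CP"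
proof (rule inj_onI)
  fix w w' assume w: "w \<in> CP" and w': "w' \<in> CP" and eq: "(ff w, ff' w) = (ff w', ff' w')"
  show "w = w'"
  proof (cases w)
    case (Inl s)
    show ?thesis
    proof (cases w')
      case (Inl s') then show ?thesis using eq \<open>w = Inl s\<close> by simp
    next
      case (Inr s')
      then have "s' \<notin> q0 ` U" using w' unfolding CP_def by auto
      moreover have "s' = q0 (e s)"
      proof -
        have "ff' w = ff' w'" using eq by simp
        then show ?thesis using Inr \<open>w = Inl s\<close> by simp
      qed
      moreover have "e s \<in> U" using w \<open>w = Inl s\<close> eV unfolding CP_def by auto
      ultimately show ?thesis by auto
    qed
  next
    case (Inr s)
    show ?thesis
    proof (cases w')
      case (Inl s')
      have "s = q0 (e s')"
      proof -
        have "ff' w = ff' w'" using eq by simp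
        then show ?thesis using Inr Inl by simp
      qed
      moreover have "s \<notin> q0 ` U" using w Inr unfolding CP_def by auto
      moreover have "e s' \<in> U" using w' Inl eV unfolding CP_def by auto
      ultimately show ?thesis by auto
    next
      case (Inr s') then show ?thesis using eq \<open>w = Inr s\<close> by simp
    qed
  qed
qed

lemma Hausdorff_TP: "Hausdorff_space TP"
  unfolding TP_def
  using S(2) inj_jj jj_CP by (intro Hausdorff_pullback) (auto simp: Hausdorff_space_prod_topology topspace_prod_topology)

lemma closed_Inl: "closedin TP (Inl ` V)"
  by (rule compactin_imp_closedin[OF Hausdorff_TP], rule image_compactin[OF _ cont_Inl])
    (use S(1) compact_space_def in auto)
lemma closed_l1: "closedin TP (l1 ` V)"
  by (rule compactin_imp_closedin[OF Hausdorff_TP], rule image_compactin[OF _ cont_l1])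
    (use S(1) compact_space_def in auto)

end


context corel_setup begin

lemma dS_tri: "a \<in> V \<Longrightarrow> b \<in> V \<Longrightarrow> c \<in> V \<Longrightarrow> dS a c \<le> dS a b + dS b c"
  using S(4) by blast

lemma DLR_q1: assumes "x \<in> U" "s' \<in> V" shows "DLR (q1 x) s' = dS (q0 x) s'"
proof (rule antisym)
  show "DLR (q1 x) s' \<le> dS (q0 x) s'" using DLR_le[OF assms(1), of "q1 x" s'] S(3) q1V assms by simp
  obtain z where z: "z \<in> U" "DLR (q1 x) s' = dS (q1 x) (q1 z) + dS (q0 z) s'" using DLR_attain q1V assms by blast
  have "dS (q0 x) s' \<le> dS (q0 x) (q0 z) + dS (q0 z) s'" using dS_tri q0V assms z by blast
  also have "\<dots> = DLR (q1 x) s'" using z dq0 dq1 assms by simp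
  finally show "dS (q0 x) s' \<le> DLR (q1 x) s'" .
qed

lemma DLR_q0: assumes "y \<in> U" "s \<in> V" shows "DLR s (q0 y) = dS s (q1 y)"
proof (rule antisym)
  show "DLR s (q0 y) \<le> dS s (q1 y)" using DLR_le[OF assms(1), of s "q0 y"] S(3) q0V assms by simp
  obtain z where z: "z \<in> U" "DLR s (q0 y) = dS s (q1 z) + dS (q0 z) (q0 y)" using DLR_attain q0V assms by blast
  have "dS s (q1 y) \<le> dS s (q1 z) + dS (q1 z) (q1 y)" using dS_tri q1V assms z by blast
  also have "\<dots> = DLR s (q0 y)" using z dq0 dq1 assms by simp
  finally show "dS s (q1 y) \<le> DLR s (q0 y)" .
qed

lemma DRL_q1: assumes "y \<in> U" "s \<in> V" shows "DRL s (q1 y) = dS s (q0 y)"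
proof (rule antisym)
  show "DRL s (q1 y) \<le> dS s (q0 y)" using DRL_le[OF assms(1), of s "q1 y"] S(3) q1V assms by simp
  obtain z where z: "z \<in> U" "DRL s (q1 y) = dS s (q0 z) + dS (q1 z) (q1 y)" using DRL_attain q1V assms by blast
  have "dS s (q0 y) \<le> dS s (q0 z) + dS (q0 z) (q0 y)" using dS_tri q0V assms z by blast
  also have "\<dots> = DRL s (q1 y)" using z dq0 dq1 assms by simp
  finally show "dS s (q0 y) \<le> DRL s (q1 y)" .
qed

lemma DRL_q0: assumes "x \<in> U" "s' \<in> V" shows "DRL (q0 x) s' = dS (q1 x) s'"
proof (rule antisym)
  show "DRL (q0 x) s' \<le> dS (q1 x) s'" using DRL_le[OF assms(1), of "q0 x" s'] S(3) q0V assms by simp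
  obtain z where z: "z \<in> U" "DRL (q0 x) s' = dS (q0 x) (q0 z) + dS (q1 z) s'" using DRL_attain q0V assms by blast
  have "dS (q1 x) s' \<le> dS (q1 x) (q1 z) + dS (q1 z) s'" using dS_tri q1V assms z by blast
  also have "\<dots> = DRL (q0 x) s'" using z dq0 dq1 assms by simp
  finally show "dS (q1 x) s' \<le> DRL (q0 x) s'" .
qed

lemma dP_00: "dP (Inl s) (Inl s') = dS s s'" by (simp add: dP_def)

lemma dP_11: assumes "s \<in> V" "s' \<in> V" shows "dP (l1 s) (l1 s') = dS s s'"
proof (cases "s \<in> q0 ` U")
  case True
  then obtain x where x: "x \<in> U" "s = q0 x" by auto
  show ?thesis
  proof (cases "s' \<in> q0 ` U")
    case True
    then obtain y where y: "y \<in> U" "s' = q0 y" by auto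
    show ?thesis using x y by (simp add: l1_q0 dP_def dq0 dq1)
  next
    case False
    then show ?thesis using x assms by (simp add: l1_q0 dP_def DLR_q1 l1_def)
  qed
next
  case False
  show ?thesis
  proof (cases "s' \<in> q0 ` U")
    case True
    then obtain y where y: "y \<in> U" "s' = q0 y" by auto
    show ?thesis using y False assms by (simp add: l1_q0 dP_def DRL_q1 l1_def)
  next
    case False2: False
    then show ?thesis using False by (simp add: dP_def l1_def)
  qed
qed

lemma dP_01: assumes "s \<in> V" "s' \<in> V" shows "dP (Inl s) (l1 s') = DLR s s'"
proof (cases "s' \<in> q0 ` U")
  case True
  then obtain y where y: "y \<in> U" "s' = q0 y" by auto
  show ?thesis using y assms by (simp add: l1_q0 dP_def DLR_q0)
next
  case False
  then show ?thesis by (simp add: dP_def l1_def)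
qed

lemma dP_10: assumes "s \<in> V" "s' \<in> V" shows "dP (l1 s) (Inl s') = DRL s s'"
proof (cases "s \<in> q0 ` U")
  case True
  then obtain x where x: "x \<in> U" "s = q0 x" by auto
  show ?thesis using x assms by (simp add: l1_q0 dP_def DRL_q0)
next
  case False
  then show ?thesis by (simp add: dP_def l1_def)
qed

lemma tri001: assumes "s1 \<in> V" "s2 \<in> V" "s3 \<in> V" shows "DLR s1 s3 \<le> dS s1 s2 + DLR s2 s3"
proof -
  obtain z where z: "z \<in> U" "DLR s2 s3 = dS s2 (q1 z) + dS (q0 z) s3" using DLR_attain assms by blast
  have "DLR s1 s3 \<le> dS s1 (q1 z) + dS (q0 z) s3" using DLR_le z by blast
  also have "\<dots> \<le> (dS s1 s2 + dS s2 (q1 z)) + dS (q0 z) s3" using dS_tri assms q1V z by (intro add_mono) auto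
  also have "\<dots> = dS s1 s2 + DLR s2 s3" using z by (simp add: ac_simps)
  finally show ?thesis .
qed

lemma tri011: assumes "s1 \<in> V" "s2 \<in> V" "s3 \<in> V" shows "DLR s1 s3 \<le> DLR s1 s2 + dS s2 s3"
proof -
  obtain z where z: "z \<in> U" "DLR s1 s2 = dS s1 (q1 z) + dS (q0 z) s2" using DLR_attain assms by blast
  have "DLR s1 s3 \<le> dS s1 (q1 z) + dS (q0 z) s3" using DLR_le z by blast
  also have "\<dots> \<le> dS s1 (q1 z) + (dS (q0 z) s2 + dS s2 s3)" using dS_tri assms q0V z by (intro add_mono) auto
  also have "\<dots> = DLR s1 s2 + dS s2 s3" using z by (simp add: ac_simps)
  finally show ?thesis .
qed

lemma tri100: assumes "s1 \<in> V" "s2 \<in> V" "s3 \<in> V" shows "DRL s1 s3 \<le> DRL s1 s2 + dS s2 s3"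
proof -
  obtain z where z: "z \<in> U" "DRL s1 s2 = dS s1 (q0 z) + dS (q1 z) s2" using DRL_attain assms by blast
  have "DRL s1 s3 \<le> dS s1 (q0 z) + dS (q1 z) s3" using DRL_le z by blast
  also have "\<dots> \<le> dS s1 (q0 z) + (dS (q1 z) s2 + dS s2 s3)" using dS_tri assms q1V z by (intro add_mono) auto
  also have "\<dots> = DRL s1 s2 + dS s2 s3" using z by (simp add: ac_simps)
  finally show ?thesis .
qed

lemma tri110: assumes "s1 \<in> V" "s2 \<in> V" "s3 \<in> V" shows "DRL s1 s3 \<le> dS s1 s2 + DRL s2 s3"
proof -
  obtain z where z: "z \<in> U" "DRL s2 s3 = dS s2 (q0 z) + dS (q1 z) s3" using DRL_attain assms by blast
  have "DRL s1 s3 \<le> dS s1 (q0 z) + dS (q1 z) s3" using DRL_le z by blast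
  also have "\<dots> \<le> (dS s1 s2 + dS s2 (q0 z)) + dS (q1 z) s3" using dS_tri assms q0V z by (intro add_mono) auto
  also have "\<dots> = dS s1 s2 + DRL s2 s3" using z by (simp add: ac_simps)
  finally show ?thesis .
qed

lemma tri010: assumes "s1 \<in> V" "s2 \<in> V" "s3 \<in> V" shows "dS s1 s3 \<le> DLR s1 s2 + DRL s2 s3"
proof -
  obtain z where z: "z \<in> U" "DLR s1 s2 = dS s1 (q1 z) + dS (q0 z) s2" using DLR_attain assms by blast
  obtain w where w: "w \<in> U" "DRL s2 s3 = dS s2 (q0 w) + dS (q1 w) s3" using DRL_attain assms by blast
  have "dS s1 s3 \<le> dS s1 (q1 z) + dS (q1 z) s3" using dS_tri assms q1V z by blast
  also have "\<dots> \<le> dS s1 (q1 z) + (dS (q1 z) (q1 w) + dS (q1 w) s3)" using dS_tri assms q1V z w by (intro add_mono) auto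
  also have "dS (q1 z) (q1 w) = dS (q0 z) (q0 w)" using dq0 dq1 z w by simp
  also have "dS (q0 z) (q0 w) \<le> dS (q0 z) s2 + dS s2 (q0 w)" using dS_tri assms q0V z w by blast
  finally have "dS s1 s3 \<le> dS s1 (q1 z) + (dS (q0 z) s2 + dS s2 (q0 w) + dS (q1 w) s3)"
    by (simp add: add_mono)
  also have "\<dots> = DLR s1 s2 + DRL s2 s3" using z w by (simp add: ac_simps)
  finally show ?thesis .
qed

lemma tri101: assumes "s1 \<in> V" "s2 \<in> V" "s3 \<in> V" shows "dS s1 s3 \<le> DRL s1 s2 + DLR s2 s3"
proof -
  obtain z where z: "z \<in> U" "DRL s1 s2 = dS s1 (q0 z) + dS (q1 z) s2" using DRL_attain assms by blast
  obtain w where w: "w \<in> U" "DLR s2 s3 = dS s2 (q1 w) + dS (q0 w) s3" using DLR_attain assms by blast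
  have "dS s1 s3 \<le> dS s1 (q0 z) + dS (q0 z) s3" using dS_tri assms q0V z by blast
  also have "\<dots> \<le> dS s1 (q0 z) + (dS (q0 z) (q0 w) + dS (q0 w) s3)" using dS_tri assms q0V z w by (intro add_mono) auto
  also have "dS (q0 z) (q0 w) = dS (q1 z) (q1 w)" using dq0 dq1 z w by simp
  also have "dS (q1 z) (q1 w) \<le> dS (q1 z) s2 + dS s2 (q1 w)" using dS_tri assms q1V z w by blast
  finally have "dS s1 s3 \<le> dS s1 (q0 z) + (dS (q1 z) s2 + dS s2 (q1 w) + dS (q0 w) s3)"
    by (simp add: add_mono)
  also have "\<dots> = DRL s1 s2 + DLR s2 s3" using z w by (simp add: ac_simps)
  finally show ?thesis .
qed

end


context corel_setup begin

lemma sep01: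
  assumes "s \<in> V" "s' \<in> V" "DLR s s' = 0" "DRL s' s = 0"
  shows "Inl s = l1 s'"
proof -
  obtain z where z: "z \<in> U" "DLR s s' = dS s (q1 z) + dS (q0 z) s'" using DLR_attain assms by blast
  obtain w where w: "w \<in> U" "DRL s' s = dS s' (q0 w) + dS (q1 w) s" using DRL_attain assms by blast
  have z1: "dS s (q1 z) = 0" "dS (q0 z) s' = 0" using z assms by auto
  have w1: "dS s' (q0 w) = 0" "dS (q1 w) s = 0" using w assms by auto
  have "d z w = 0"
  proof -
    have "d z w = dS (q0 z) (q0 w)" using dq0 z w by simp
    also have "\<dots> \<le> dS (q0 z) s' + dS s' (q0 w)" using dS_tri q0V z w assms by blast
    finally show ?thesis using z1 w1 by simp
  qed
  moreover have "d w z = 0"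
  proof -
    have "d w z = dS (q1 w) (q1 z)" using dq1 z w by simp
    also have "\<dots> \<le> dS (q1 w) s + dS s (q1 z)" using dS_tri q1V z w assms by blast
    finally show ?thesis using z1 w1 by simp
  qed
  ultimately have zw: "z = w" using X(5) z w by blast
  have "s = q1 z" using S(5)[of s "q1 z"] z1 w1 zw assms q1V z by auto
  moreover have "s' = q0 z" using S(5)[of s' "q0 z"] z1 w1 zw assms q0V z by auto
  ultimately show ?thesis using l1_q0 z by simp
qed

lemma dP_refl: "w \<in> CP \<Longrightarrow> dP w w = 0"
  by (erule CP_cases) (auto simp: dP_00 dP_11 S(3))

lemma dP_tri:
  assumes "w1 \<in> CP" "w2 \<in> CP" "w3 \<in> CP"
  shows "dP w1 w3 \<le> dP w1 w2 + dP w2 w3"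
  using assms(1)
proof (cases rule: CP_cases)
  case (1 s1)
  note a = this
  show ?thesis using assms(2)
  proof (cases rule: CP_cases)
    case (1 s2)
    show ?thesis using assms(3)
      by (cases rule: CP_cases) (use a 1 in \<open>auto simp: dP_00 dP_01 dP_11 dP_10 intro: dS_tri tri001\<close>)
  next
    case (2 s2)
    show ?thesis using assms(3)
      by (cases rule: CP_cases) (use a 2 in \<open>auto simp: dP_00 dP_01 dP_11 dP_10 intro: tri010 tri011\<close>)
  qed
next
  case (2 s1)
  note a = this
  show ?thesis using assms(2)
  proof (cases rule: CP_cases)
    case (1 s2)
    show ?thesis using assms(3)
      by (cases rule: CP_cases) (use a 1 in \<open>auto simp: dP_00 dP_01 dP_11 dP_10 intro: tri100 tri101\<close>)
  next
    case (2 s2)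
    show ?thesis using assms(3)
      by (cases rule: CP_cases) (use a 2 in \<open>auto simp: dP_00 dP_01 dP_11 dP_10 intro: tri110 dS_tri\<close>)
  qed
qed

lemma dP_sep:
  assumes "w \<in> CP" "w' \<in> CP" "dP w w' = 0" "dP w' w = 0"
  shows "w = w'"
  using assms(1)
proof (cases rule: CP_cases)
  case (1 s)
  note a = this
  show ?thesis using assms(2)
  proof (cases rule: CP_cases)
    case (1 s')
    then show ?thesis using a assms S(5)[of s s'] by (auto simp: dP_00)
  next
    case (2 s')
    then show ?thesis using a assms sep01[of s s'] by (auto simp: dP_01 dP_10)
  qed
next
  case (2 s)
  note a = this
  show ?thesis using assms(2)
  proof (cases rule: CP_cases)
    case (1 s')
    then show ?thesis using a assms sep01[of s' s] by (auto simp: dP_01 dP_10)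
  next
    case (2 s')
    then show ?thesis using a assms S(5)[of s s'] by (auto simp: dP_11)
  qed
qed

lemma closed_image_lsc:
  assumes "lsc (prod_topology TS TS) F" "continuous_map (prod_topology TS TS) (prod_topology TP TP) g"
  shows "closedin (prod_topology TP TP) (g ` {p \<in> topspace (prod_topology TS TS). F p \<le> u})"
proof -
  have "compact_space (prod_topology TS TS)" using S(1) by (simp add: compact_space_prod_topology)
  then have "compactin (prod_topology TS TS) {p \<in> topspace (prod_topology TS TS). F p \<le> u}"
    using lsc_closed[OF assms(1)] by (rule closedin_compact_space)
  then have "compactin (prod_topology TP TP) (g ` {p \<in> topspace (prod_topology TS TS). F p \<le> u})"
    using assms(2) by (rule image_compactin)
  moreover have "Hausdorff_space (prod_topology TP TP)" using Hausdorff_TP by (simp add: Hausdorff_space_prod_topology)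
  ultimately show ?thesis by (simp add: compactin_imp_closedin)
qed

lemma cont_pair_maps:
  assumes "continuous_map TS TP g1" "continuous_map TS TP g2"
  shows "continuous_map (prod_topology TS TS) (prod_topology TP TP) (\<lambda>p. (g1 (fst p), g2 (snd p)))"
  using continuous_map_pairedI[OF continuous_map_compose[OF continuous_map_fst assms(1)]
        continuous_map_compose[OF continuous_map_snd assms(2)]] by (simp add: o_def)

lemma dP_lsc: "lsc (prod_topology TP TP) (\<lambda>p. dP (fst p) (snd p))"
proof (rule lsc_of_closed)
  fix u
  let ?A = "\<lambda>F::'s \<times> 's \<Rightarrow> ennreal. {p \<in> topspace (prod_topology TS TS). F p \<le> u}"
  let ?K00 = "(\<lambda>p. (Inl (fst p), Inl (snd p))) ` ?A (\<lambda>p. dS (fst p) (snd p))"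
  let ?K11 = "(\<lambda>p. (l1 (fst p), l1 (snd p))) ` ?A (\<lambda>p. dS (fst p) (snd p))"
  let ?K01 = "(\<lambda>p. (Inl (fst p), l1 (snd p))) ` ?A (\<lambda>p. DLR (fst p) (snd p))"
  let ?K10 = "(\<lambda>p. (l1 (fst p), Inl (snd p))) ` ?A (\<lambda>p. DRL (fst p) (snd p))"
  have c: "closedin (prod_topology TP TP) (?K00 \<union> ?K11 \<union> ?K01 \<union> ?K10)"
    by (intro closedin_Un closed_image_lsc cont_pair_maps S(6) DLR_lsc DRL_lsc cont_Inl cont_l1)
  have "{p \<in> topspace (prod_topology TP TP). dP (fst p) (snd p) \<le> u} = ?K00 \<union> ?K11 \<union> ?K01 \<union> ?K10"
  proof
    show "{p \<in> topspace (prod_topology TP TP). dP (fst p) (snd p) \<le> u} \<subseteq> ?K00 \<union> ?K11 \<union> ?K01 \<union> ?K10"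
    proof
      fix p assume p: "p \<in> {p \<in> topspace (prod_topology TP TP). dP (fst p) (snd p) \<le> u}"
      obtain w w' where ww: "p = (w,w')" by fastforce
      have w: "w \<in> CP" and w': "w' \<in> CP" and le: "dP w w' \<le> u"
        using p ww by (auto simp: topspace_prod_topology topspace_TP)
      show "p \<in> ?K00 \<union> ?K11 \<union> ?K01 \<union> ?K10"
        using w
      proof (cases rule: CP_cases)
        case (1 s)
        note a = this
        show ?thesis using w'
        proof (cases rule: CP_cases)
          case (1 s')
          then have "(w,w') = (\<lambda>p. (Inl (fst p), Inl (snd p))) (s,s')" "(s,s') \<in> ?A (\<lambda>p. dS (fst p) (snd p))"
            using a le by (auto simp: dP_00 topspace_prod_topology)
          then show ?thesis using ww by blast
        next
          case (2 s')
          then have "(w,w') = (\<lambda>p. (Inl (fst p), l1 (snd p))) (s,s')" "(s,s') \<in> ?A (\<lambda>p. DLR (fst p) (snd p))"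
            using a le by (auto simp: dP_01 topspace_prod_topology)
          then show ?thesis using ww by blast
        qed
      next
        case (2 s)
        note a = this
        show ?thesis using w'
        proof (cases rule: CP_cases)
          case (1 s')
          then have "(w,w') = (\<lambda>p. (l1 (fst p), Inl (snd p))) (s,s')" "(s,s') \<in> ?A (\<lambda>p. DRL (fst p) (snd p))"
            using a le by (auto simp: dP_10 topspace_prod_topology)
          then show ?thesis using ww by blast
        next
          case (2 s')
          then have "(w,w') = (\<lambda>p. (l1 (fst p), l1 (snd p))) (s,s')" "(s,s') \<in> ?A (\<lambda>p. dS (fst p) (snd p))"
            using a le by (auto simp: dP_11 topspace_prod_topology)
          then show ?thesis using ww by blast
        qed
      qed
    qed
    show "?K00 \<union> ?K11 \<union> ?K01 \<union> ?K10 \<subseteq> {p \<in> topspace (prod_topology TP TP). dP (fst p) (snd p) \<le> u}"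
      by (auto simp: topspace_prod_topology topspace_TP Inl_CP l1_CP dP_00 dP_11 dP_01 dP_10)
  qed
  then show "closedin (prod_topology TP TP) {p \<in> topspace (prod_topology TP TP). dP (fst p) (snd p) \<le> u}"
    using c by simp
qed

lemma metch_P: "metch (TP, dP)"
  by (rule metchI) (auto simp: topspace_TP compact_TP Hausdorff_TP dP_refl dP_tri dP_sep dP_lsc)

lemma mor_Inl: "mor (TS, dS) (TP, dP) Inl"
  by (rule morI[OF cont_Inl]) (simp add: dP_00)

lemma mor_l1: "mor (TS, dS) (TP, dP) l1"
  by (rule morI[OF cont_l1]) (simp add: dP_11)

end


context corel_setup begin

lemma Inl_eq_l1:
  assumes "s \<in> V" "s' \<in> V" "Inl s = l1 s'"
  obtains x where "x \<in> U" "s' = q0 x" "s = q1 x"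
proof -
  have "s' \<in> q0 ` U" using assms unfolding l1_def by (auto split: if_splits)
  then obtain x where x: "x \<in> U" "s' = q0 x" by auto
  then have "s = q1 x" using assms l1_q0 by simp
  then show ?thesis using that x by blast
qed

lemma pushout_P: "pushout_wrt TYPE('s + 's) (T, d) (TS, dS) (TS, dS) q1 q0 (TP, dP) Inl l1"
  unfolding pushout_wrt_def
proof (intro conjI metX metS metch_P q0m q1m mor_Inl mor_l1 ballI allI impI)
  fix x assume "x \<in> carrier_of (T, d)"
  then show "Inl (q1 x) = l1 (q0 x)" using l1_q0 by (simp add: carrier_of_def)
next
  fix Q :: "('s + 's) metobj" and g0 g1
  assume as: "metch Q \<and> mor (TS, dS) Q g0 \<and> mor (TS, dS) Q g1 \<and> (\<forall>x\<in>carrier_of (T, d). g0 (q1 x) = g1 (q0 x))"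
  obtain TQ dQ where Qeq: "Q = (TQ, dQ)" by fastforce
  have mQ: "metch (TQ, dQ)" and m0: "mor (TS, dS) (TQ, dQ) g0" and m1: "mor (TS, dS) (TQ, dQ) g1"
    and gg: "\<And>x. x \<in> U \<Longrightarrow> g0 (q1 x) = g1 (q0 x)"
    using as Qeq by (auto simp: carrier_of_def)
  note QQ = metchD[OF mQ]
  note G0 = morD[OF m0]
  note G1 = morD[OF m1]
  define k where "k w = (if w \<in> Inl ` V then g0 (ff w) else g1 (ff' w))" for w
  have agree: "g0 s = g1 s'" if "s \<in> V" "s' \<in> V" "Inl s = l1 s'" for s s'
    using Inl_eq_l1[OF that] gg by metis
  have k_Inl: "k (Inl s) = g0 s" if "s \<in> V" for s using that unfolding k_def by auto
  have k_l1: "k (l1 s) = g1 s" if "s \<in> V" for s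
  proof (cases "l1 s \<in> Inl ` V")
    case True
    then obtain s'' where s'': "s'' \<in> V" "l1 s = Inl s''" by auto
    then have "k (l1 s) = g0 s''" unfolding k_def by auto
    also have "\<dots> = g1 s" using agree[of s'' s] s'' that by simp
    finally show ?thesis .
  next
    case False
    then show ?thesis unfolding k_def using ff'_l1 that by simp
  qed
  have cont_k: "continuous_map TP TQ k"
    unfolding k_def
  proof (rule paste2)
    show "continuous_map TP TQ (\<lambda>w. g0 (ff w))" using continuous_map_compose[OF cont_ff G0(1)] by (simp add: o_def)
    show "continuous_map TP TQ (\<lambda>w. g1 (ff' w))" using continuous_map_compose[OF cont_ff' G1(1)] by (simp add: o_def)
    show "closedin TP (Inl ` V)" by (rule closed_Inl)
    show "closedin TP (l1 ` V)" by (rule closed_l1)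
    show "topspace TP \<subseteq> Inl ` V \<union> l1 ` V" using topspace_TP CP_eq by simp
    fix w assume "w \<in> Inl ` V" "w \<in> l1 ` V"
    then obtain s s' where ss: "s \<in> V" "s' \<in> V" "w = Inl s" "w = l1 s'" by auto
    then show "g0 (ff w) = g1 (ff' w)" using agree[of s s'] ff'_l1[of s'] by simp
  qed
  have nonexp: "dQ (k w) (k w') \<le> dP w w'" if "w \<in> CP" "w' \<in> CP" for w w'
    using that(1)
  proof (cases rule: CP_cases)
    case (1 s)
    note a = this
    show ?thesis using that(2)
    proof (cases rule: CP_cases)
      case (1 s')
      then show ?thesis using a G0(2) by (simp add: k_Inl dP_00)
    next
      case (2 s')
      obtain z where z: "z \<in> U" "DLR s s' = dS s (q1 z) + dS (q0 z) s'" using DLR_attain a 2 by blast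
      have "dQ (g0 s) (g1 s') \<le> dQ (g0 s) (g0 (q1 z)) + dQ (g0 (q1 z)) (g1 s')"
        using QQ(4) G0(3) G1(3) a 2 z q1V by blast
      also have "\<dots> = dQ (g0 s) (g0 (q1 z)) + dQ (g1 (q0 z)) (g1 s')" using gg z by simp
      also have "\<dots> \<le> dS s (q1 z) + dS (q0 z) s'" using G0(2) G1(2) a 2 z q0V q1V by (intro add_mono) auto
      finally show ?thesis using a 2 z by (simp add: k_Inl k_l1 dP_01)
    qed
  next
    case (2 s)
    note a = this
    show ?thesis using that(2)
    proof (cases rule: CP_cases)
      case (1 s')
      obtain z where z: "z \<in> U" "DRL s s' = dS s (q0 z) + dS (q1 z) s'" using DRL_attain a 1 by blast
      have "dQ (g1 s) (g0 s') \<le> dQ (g1 s) (g1 (q0 z)) + dQ (g1 (q0 z)) (g0 s')"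
        using QQ(4) G0(3) G1(3) a 1 z q0V by blast
      also have "\<dots> = dQ (g1 s) (g1 (q0 z)) + dQ (g0 (q1 z)) (g0 s')" using gg z by simp
      also have "\<dots> \<le> dS s (q0 z) + dS (q1 z) s'" using G0(2) G1(2) a 1 z q0V q1V by (intro add_mono) auto
      finally show ?thesis using a 1 z by (simp add: k_Inl k_l1 dP_10)
    next
      case (2 s')
      then show ?thesis using a G1(2) by (simp add: k_l1 dP_11)
    qed
  qed
  have mk: "mor (TP, dP) Q k" unfolding Qeq
    by (rule morI[OF cont_k]) (simp add: topspace_TP nonexp)
  show "\<exists>k. mor (TP, dP) Q k \<and> (\<forall>y\<in>carrier_of (TS, dS). k (Inl y) = g0 y) \<and>
             (\<forall>z\<in>carrier_of (TS, dS). k (l1 z) = g1 z) \<and>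
             (\<forall>k'. mor (TP, dP) Q k' \<and> (\<forall>y\<in>carrier_of (TS, dS). k' (Inl y) = g0 y) \<and>
                   (\<forall>z\<in>carrier_of (TS, dS). k' (l1 z) = g1 z) \<longrightarrow>
                   (\<forall>p\<in>carrier_of (TP, dP). k' p = k p))"
  proof (intro exI[of _ k] conjI mk ballI allI impI)
    fix y assume "y \<in> carrier_of (TS, dS)" then show "k (Inl y) = g0 y" using k_Inl by (simp add: carrier_of_def)
  next
    fix y assume "y \<in> carrier_of (TS, dS)" then show "k (l1 y) = g1 y" using k_l1 by (simp add: carrier_of_def)
  next
    fix k' p
    assume k': "mor (TP, dP) Q k' \<and> (\<forall>y\<in>carrier_of (TS, dS). k' (Inl y) = g0 y) \<and>
                   (\<forall>z\<in>carrier_of (TS, dS). k' (l1 z) = g1 z)"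
      and p: "p \<in> carrier_of (TP, dP)"
    then have "p \<in> CP" by (simp add: carrier_of_def topspace_TP)
    then show "k' p = k p"
      by (cases rule: CP_cases) (use k' in \<open>auto simp: carrier_of_def k_Inl k_l1\<close>)
  qed
qed

lemma trans_fact:
  assumes "transitive_corel (T, d) (TS, dS) q0 q1" "p \<in> U" "q \<in> U"
  shows "\<exists>z\<in>U. cc p z + cc z q \<le> cc p q"
proof -
  obtain t where t: "mor (TS, dS) (TP, dP) t"
    "\<forall>x\<in>carrier_of (T, d). t (q0 x) = Inl (q0 x) \<and> t (q1 x) = l1 (q1 x)"
    using assms(1) pushout_P unfolding transitive_corel_def by blast
  have "dP (t (q0 p)) (t (q1 q)) \<le> cc p q" using morD(2)[OF t(1)] assms q0V q1V by blast
  then have le: "DLR (q0 p) (q1 q) \<le> cc p q" using t(2) assms dP_01 q0V q1V by (simp add: carrier_of_def)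
  obtain z where "z \<in> U" "DLR (q0 p) (q1 q) = cc p z + cc z q" using DLR_attain q0V q1V assms by blast
  then show ?thesis using le by auto
qed

end


context corel_setup begin

lemma effective_main:
  assumes tr: "\<And>p q. p \<in> U \<Longrightarrow> q \<in> U \<Longrightarrow> \<exists>z\<in>U. cc p z + cc z q \<le> cc p q"
  shows "pushout_wrt TYPE('q) (subtopology T {x \<in> U. q0 x = q1 x}, d) (T, d) (T, d) id id (TS, dS) q0 q1"
  unfolding pushout_wrt_def
proof (intro conjI metX metS q0m q1m ballI allI impI)
  define A where "A = {x \<in> U. q0 x = q1 x}"
  have clA: "closedin T A" unfolding A_def by (rule closedin_continuous_maps_eq[OF S(2) Q0(1) Q1(1)])
  have tA: "topspace (subtopology T A) = A" using clA closedin_subset by (auto simp: topspace_subtopology)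
  have ci: "continuous_map (subtopology T A) T id" by (rule continuous_map_from_subtopology[OF continuous_map_id])
  show "metch (subtopology T {x \<in> U. q0 x = q1 x}, d)"
    unfolding A_def[symmetric]
  proof (rule metchI)
    show "compact_space (subtopology T A)"
      by (rule compact_space_subtopology) (rule closedin_compact_space[OF X(1) clA])
    show "Hausdorff_space (subtopology T A)" using X(2) by (rule Hausdorff_space_subtopology)
    have cp: "continuous_map (prod_topology (subtopology T A) (subtopology T A)) (prod_topology T T) (\<lambda>p. (fst p, snd p))"
      using continuous_map_pairedI[OF continuous_map_compose[OF continuous_map_fst ci]
        continuous_map_compose[OF continuous_map_snd ci]] by (simp add: o_def)
    show "lsc (prod_topology (subtopology T A) (subtopology T A)) (\<lambda>p. d (fst p) (snd p))"
      using lsc_comp[OF cp X(6)] by simp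
  qed (use X(3,4,5) tA clA closedin_subset in auto)
  show "mor (subtopology T {x \<in> U. q0 x = q1 x}, d) (T, d) id"
    by (rule morI) (auto intro: continuous_map_from_subtopology[OF continuous_map_id])
  show "mor (subtopology T {x \<in> U. q0 x = q1 x}, d) (T, d) id"
    by (rule morI) (auto intro: continuous_map_from_subtopology[OF continuous_map_id])
  fix x assume "x \<in> carrier_of (subtopology T {x \<in> U. q0 x = q1 x}, d)"
  then show "q0 (id x) = q1 (id x)" by (auto simp: carrier_of_def)
next
  fix Q :: "'q metobj" and h0 h1
  assume as: "metch Q \<and> mor (T, d) Q h0 \<and> mor (T, d) Q h1 \<and>
      (\<forall>x\<in>carrier_of (subtopology T {x \<in> U. q0 x = q1 x}, d). h0 (id x) = h1 (id x))"
  obtain TQ dQ where Qeq: "Q = (TQ, dQ)" by fastforce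
  have mQ: "metch (TQ, dQ)" and m0: "mor (T, d) (TQ, dQ) h0" and m1: "mor (T, d) (TQ, dQ) h1"
    and hh: "\<And>x. x \<in> U \<Longrightarrow> q0 x = q1 x \<Longrightarrow> h0 x = h1 x"
    using as Qeq by (auto simp: carrier_of_def)
  note QQ = metchD[OF mQ]
  note H0 = morD[OF m0]
  note H1 = morD[OF m1]
  define k where "k s = (if s \<in> q0 ` U then h0 (e s) else h1 (e s))" for s
  have k0: "k (q0 x) = h0 x" if "x \<in> U" for x using that unfolding k_def by auto
  have k1: "k (q1 x) = h1 x" if "x \<in> U" for x
  proof (cases "q1 x \<in> q0 ` U")
    case True
    then obtain y where y: "y \<in> U" "q1 x = q0 y" by auto
    then have "y = x" using q0q1 that by metis
    then show ?thesis unfolding k_def using True that hh y by auto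
  next
    case False then show ?thesis unfolding k_def using that by auto
  qed
  have cont_k: "continuous_map TS TQ k"
    unfolding k_def
  proof (rule paste2)
    show "continuous_map TS TQ (\<lambda>s. h0 (e s))" using continuous_map_compose[OF E(1) H0(1)] by (simp add: o_def)
    show "continuous_map TS TQ (\<lambda>s. h1 (e s))" using continuous_map_compose[OF E(1) H1(1)] by (simp add: o_def)
    show "closedin TS (q0 ` U)"
      by (rule compactin_imp_closedin[OF S(2)], rule image_compactin[OF _ Q0(1)]) (use X(1) compact_space_def in auto)
    show "closedin TS (q1 ` U)"
      by (rule compactin_imp_closedin[OF S(2)], rule image_compactin[OF _ Q1(1)]) (use X(1) compact_space_def in auto)
    show "V \<subseteq> q0 ` U \<union> q1 ` U" using cover by simp
    fix s assume "s \<in> q0 ` U" "s \<in> q1 ` U"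
    then obtain x y where xy: "x \<in> U" "y \<in> U" "s = q0 x" "s = q1 y" by auto
    then have "x = y" using q0q1 by metis
    then show "h0 (e s) = h1 (e s)" using xy hh by auto
  qed
  have cross: "dQ (h0 x) (h1 y) \<le> cc x y \<and> dQ (h1 x) (h0 y) \<le> cc x y" if xyU: "x \<in> U" "y \<in> U" for x y
  proof (cases "cc x y < \<infinity>")
    case False
    then have "cc x y = \<infinity>" by (simp add: not_less top_unique)
    then show ?thesis by simp
  next
    case True
    obtain a where a: "a \<in> U" "q0 a = q1 a" "d x a + d a y \<le> cc x y" using key[OF tr xyU True] by blast
    have ha: "h0 a = h1 a" using hh a by simp
    have "dQ (h0 x) (h1 y) \<le> dQ (h0 x) (h0 a) + dQ (h0 a) (h1 y)"
      using QQ(4) H0(3) H1(3) that a by blast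
    also have "\<dots> = dQ (h0 x) (h0 a) + dQ (h1 a) (h1 y)" using ha by simp
    also have "\<dots> \<le> d x a + d a y" using H0(2) H1(2) that a by (intro add_mono) auto
    finally have 1: "dQ (h0 x) (h1 y) \<le> cc x y" using a by simp
    have "dQ (h1 x) (h0 y) \<le> dQ (h1 x) (h1 a) + dQ (h1 a) (h0 y)"
      using QQ(4) H0(3) H1(3) that a by blast
    also have "\<dots> = dQ (h1 x) (h1 a) + dQ (h0 a) (h0 y)" using ha by simp
    also have "\<dots> \<le> d x a + d a y" using H0(2) H1(2) that a by (intro add_mono) auto
    finally have 2: "dQ (h1 x) (h0 y) \<le> cc x y" using a by simp
    show ?thesis using 1 2 by simp
  qed
  have nonexp: "dQ (k s) (k s') \<le> dS s s'" if "s \<in> V" "s' \<in> V" for s s'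
  proof -
    from that(1) show ?thesis
    proof (rule Vcases)
      fix x assume x: "x \<in> U" "s = q0 x"
      from that(2) show ?thesis
      proof (rule Vcases)
        fix y assume y: "y \<in> U" "s' = q0 y"
        then show ?thesis using x H0(2) dq0 by (simp add: k0)
      next
        fix y assume y: "y \<in> U" "s' = q1 y"
        then show ?thesis using x cross by (simp add: k0 k1)
      qed
    next
      fix x assume x: "x \<in> U" "s = q1 x"
      from that(2) show ?thesis
      proof (rule Vcases)
        fix y assume y: "y \<in> U" "s' = q0 y"
        then show ?thesis using x cross c_sym by (simp add: k0 k1)
      next
        fix y assume y: "y \<in> U" "s' = q1 y"
        then show ?thesis using x H1(2) dq1 by (simp add: k1)
      qed
    qed
  qed
  have mk: "mor (TS, dS) Q k" unfolding Qeq by (rule morI[OF cont_k]) (rule nonexp)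
  show "\<exists>k. mor (TS, dS) Q k \<and> (\<forall>y\<in>carrier_of (T, d). k (q0 y) = h0 y) \<and>
             (\<forall>z\<in>carrier_of (T, d). k (q1 z) = h1 z) \<and>
             (\<forall>k'. mor (TS, dS) Q k' \<and> (\<forall>y\<in>carrier_of (T, d). k' (q0 y) = h0 y) \<and>
                   (\<forall>z\<in>carrier_of (T, d). k' (q1 z) = h1 z) \<longrightarrow>
                   (\<forall>p\<in>carrier_of (TS, dS). k' p = k p))"
  proof (intro exI[of _ k] conjI mk ballI allI impI)
    fix y assume "y \<in> carrier_of (T, d)" then show "k (q0 y) = h0 y" using k0 by (simp add: carrier_of_def)
  next
    fix y assume "y \<in> carrier_of (T, d)" then show "k (q1 y) = h1 y" using k1 by (simp add: carrier_of_def)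
  next
    fix k' p
    assume k': "mor (TS, dS) Q k' \<and> (\<forall>y\<in>carrier_of (T, d). k' (q0 y) = h0 y) \<and>
                   (\<forall>z\<in>carrier_of (T, d). k' (q1 z) = h1 z)"
      and p: "p \<in> carrier_of (TS, dS)"
    then have "p \<in> V" by (simp add: carrier_of_def)
    then show "k' p = k p"
      by (rule Vcases) (use k' in \<open>auto simp: carrier_of_def k0 k1\<close>)
  qed
qed

end

theorem theorem5p15:
  fixes X :: "'x metobj" and S :: "'s metobj" and q0 q1 :: "'x \<Rightarrow> 's"
  assumes "equivalence_corel X S q0 q1"
  shows "effective_wrt TYPE('q) X S q0 q1"
proof -
  obtain T d where Xeq: "X = (T, d)" by fastforce
  obtain TS dS where Seq: "S = (TS, dS)" by fastforce
  have bc: "binary_corel (T, d) (TS, dS) q0 q1" and rc: "reflexive_corel (T, d) (TS, dS) q0 q1"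
    and sc: "symmetric_corel (T, d) (TS, dS) q0 q1" and tc: "transitive_corel (T, d) (TS, dS) q0 q1"
    using assms Xeq Seq unfolding equivalence_corel_def by auto
  obtain e where e: "mor (TS, dS) (T, d) e" "\<forall>x\<in>carrier_of (T, d). e (q0 x) = x \<and> e (q1 x) = x"
    using rc unfolding reflexive_corel_def by blast
  obtain sm where sm: "mor (TS, dS) (TS, dS) sm" "\<forall>x\<in>carrier_of (T, d). sm (q0 x) = q1 x \<and> sm (q1 x) = q0 x"
    using sc unfolding symmetric_corel_def by blast
  interpret corel_setup T d TS dS q0 q1 e sm
    using bc e sm unfolding binary_corel_def by unfold_locales (auto simp: carrier_of_def)
  have "pushout_wrt TYPE('q) (subtopology T {x \<in> topspace T. q0 x = q1 x}, d) (T, d) (T, d) id id (TS, dS) q0 q1"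
    by (rule effective_main) (rule trans_fact[OF tc])
  then show ?thesis unfolding effective_wrt_def equaliser_obj_def by (simp add: Xeq Seq carrier_of_def)
qed



end
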